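(* Let $Q$ be a groupoid quantale with base locale $A$ and let $X$ be a principal $Q$-locale over a locale $M$. Then $X$ is a fully open principal $G$-bundle over $M$, where $G=\mathcal G(Q)$ is the open groupoid of $Q$ (with anchor $p$ given by $p^*(a)=a\triangleright1_X$, action $a_X$ with $a_X^*(x)=\bigvee_{q\cdot y\le x}q\otimes y$, and bundle map $\pi:X\to M$ the open surjection whose direct image is $\tilde\varsigma$).
   Context: Let $A$ be a locale. A groupoid quantale $Q$ (base locale $A$) is an involutive quantale which is an $A$-$A$-bimodule (actions $a\triangleright q$, $q\triangleleft a$) with $(a\triangleright x)y=a\triangleright(xy)$, $(x\triangleleft a)y=x(a\triangleright y)$, $(xy)\triangleleft a=x(y\triangleleft a)$, $(a\triangleright x\triangleleft b)^*=b\triangleright x^*\triangleleft a$; a frame with $(a\triangleright q)\wedge m=a\triangleright(q\wedge m)$, $m\wedge(q\triangleleft a)=(q\wedge m)\triangleleft a$; equipped with a sup-lattice homomorphism $\varsigma_Q:Q\to A$ with $\varsigma_Q(1_Q)=1_A$, $\varsigma_Q(x)\triangleright y\le xx^*y$, $\varsigma_Q(x)\triangleright x=x$, $\varsigma_Q(a\triangleright x)=a\wedge\varsigma_Q(x)$, and a frame homomorphism $\upsilon:Q\to A$ with $\upsilon(a\triangleright1_Q)=a=\upsilon(1_Q\triangleleft a)$; the right adjoint of $Q\otimes_AQ\to Q$ preserves joins; $\bigvee_{xy\le a}\upsilon(x)\triangleright y=a$, $\upsilon(a)\triangleright1_Q=\bigvee_{xx^*\le a}x$. Its open groupoid $G=\mathcal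 G(Q)$ has $\mathcal O(G_1)=Q$, $\mathcal O(G_0)=A$, $d^*(a)=a\triangleright1_Q$, $r^*(a)=1_Q\triangleleft a$, $d_!=\varsigma_Q$, $u^*=\upsilon$, with quantale $\mathcal O(G)=Q$. A $Q$-module is a locale $X$ with a left $Q$-action $q\cdot x$ and unital left $A$-module structure $a\triangleright x$ with $(a\triangleright q)\cdot x=a\triangleright(q\cdot x)$, $(q\triangleleft a)\cdot x=q\cdot(a\triangleright x)$, $a\triangleright(x\wedge y)=(a\triangleright x)\wedge y$. A pre-Hilbert $Q$-module has $\langle-,-\rangle:X\times X\to Q$ with $\langle q\cdot x,y\rangle=q\langle x,y\rangle$, $a\triangleright\langle x,1_X\rangle=\langle a\triangleright x,1_X\rangle$, $\langle\bigvee x_\alpha,y\rangle=\bigvee\langle x_\alpha,y\rangle$, $\langle x,y\rangle=\langle y,x\rangle^*$. A stably supported $Q$-module has in addition a monotone $\varsigma_X:X\to A$ with $\varsigma_X(1_X)=1_A$, $\varsigma_X(x)\triangleright1_X\le\langle x,x\rangle\cdot1_X$, $\varsigma_X(x)\triangleright x=x$, $\varsigma_X(q\cdot x)\le\varsigma_Q(q)$. With $Q\otimes_AX$ the quotient of $Q\otimes X$ by $(q\triangleleft a)\otimes x=q\otimes(a\triangleright x)$, a $Q$-locale is a stably supported $Q$-module such that $\alpha_*:X\to Q\otimes_AX$, $\alpha_*(x)=\bigvee_{q\cdot y\le x}q\otimes y$, preserves joins, and $\bigvee_{q\cdot y\le x}\upsilon(q)\triangleright y=x$ for all $x$. A principal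 $Q$-locale over a locale $M$ is a $Q$-locale $X$ such that (P1) $X$ is an open $M$-locale, i.e. there is an open map of locales $\pi:X\to M$, with direct image $\tilde\varsigma=\pi_!$ satisfying $\tilde\varsigma(1_X)=1_M$; (P2) $\tilde\varsigma(q\cdot x)=\tilde\varsigma(\varsigma_Q(q^* )\triangleright x)$ for all $q\in Q$, $x\in X$; (P3) the map $\varphi:X\otimes_MX\to Q\otimes_AX$, $\varphi(x\otimes y)=\bigvee_{q\cdot z\le x}q\otimes(z\wedge y)$, is a frame isomorphism. For an open groupoid $G$, a $G$-locale is a locale $X$ with anchor $p:X\to G_0$ and associative unital action $a:G_1\times_{G_0}X\to X$ with $p\circ a=r\circ\pi_1$. A principal $G$-bundle over $M$ is a $G$-locale with $\pi:X\to M$, $\pi\circ a=\pi\circ\pi_2$, $\langle a,\pi_2\rangle:G_1\times_{G_0}X\to X\times_MX$ an isomorphism and $\pi$ an open surjection; it is fully open if moreover $p$ is an open surjection. *)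

theory Defs
  imports Main
begin

text \<open>A frame (the frame of opens of a locale) is presented by a carrier set S inside an
  ambient complete lattice, with the induced order.  Joins and meets are computed inside S.
  For a locale given by a whole type we use S = UNIV.\<close>

definition c_is_lub :: "'a::complete_lattice set \<Rightarrow> 'a set \<Rightarrow> 'a \<Rightarrow> bool" where
  "c_is_lub S T x \<longleftrightarrow> x \<in> S \<and> (\<forall>t\<in>T. t \<le> x) \<and> (\<forall>y\<in>S. (\<forall>t\<in>T. t \<le> y) \<longrightarrow> x \<le> y)"

definition c_is_glb :: "'a::complete_lattice set \<Rightarrow> 'a set \<Rightarrow> 'a \<Rightarrow> bool" where
  "c_is_glb S T x \<longleftrightarrow> x \<in> S \<and> (\<forall>t\<in>T. x \<le> t) \<and> (\<forall>y\<in>S. (\<forall>t\<in>T. y \<le> t) \<longrightarrow> y \<le> x)"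

definition c_lub :: "'a::complete_lattice set \<Rightarrow> 'a set \<Rightarrow> 'a" where
  "c_lub S T = (THE x. c_is_lub S T x)"

definition c_glb :: "'a::complete_lattice set \<Rightarrow> 'a set \<Rightarrow> 'a" where
  "c_glb S T = (THE x. c_is_glb S T x)"

definition c_meet :: "'a::complete_lattice set \<Rightarrow> 'a \<Rightarrow> 'a \<Rightarrow> 'a" where
  "c_meet S x y = c_glb S {x, y}"

definition c_top :: "'a::complete_lattice set \<Rightarrow> 'a" where
  "c_top S = c_lub S S"

definition is_frame :: "'a::complete_lattice set \<Rightarrow> bool" where
  "is_frame S \<longleftrightarrow> (\<forall>T\<subseteq>S. \<exists>x. c_is_lub S T x) \<and>
     (\<forall>a\<in>S. \<forall>T\<subseteq>S. c_meet S a (c_lub S T) = c_lub S (c_meet S a ` T))"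

text \<open>Frame homomorphisms (inverse images of locale maps), from carrier S to carrier S'.\<close>

definition frame_hom :: "'a::complete_lattice set \<Rightarrow> 'b::complete_lattice set \<Rightarrow> ('a \<Rightarrow> 'b) \<Rightarrow> bool" where
  "frame_hom S S' h \<longleftrightarrow> (\<forall>x\<in>S. h x \<in> S') \<and> h (c_top S) = c_top S' \<and>
     (\<forall>x\<in>S. \<forall>y\<in>S. h (c_meet S x y) = c_meet S' (h x) (h y)) \<and>
     (\<forall>T\<subseteq>S. h (c_lub S T) = c_lub S' (h ` T))"

definition frame_iso :: "'a::complete_lattice set \<Rightarrow> 'b::complete_lattice set \<Rightarrow> ('a \<Rightarrow> 'b) \<Rightarrow> bool" where
  "frame_iso S S' h \<longleftrightarrow> frame_hom S S' h \<and> bij_betw h S S'"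

definition sup_hom :: "'a::complete_lattice set \<Rightarrow> 'b::complete_lattice set \<Rightarrow> ('a \<Rightarrow> 'b) \<Rightarrow> bool" where
  "sup_hom S S' h \<longleftrightarrow> (\<forall>x\<in>S. h x \<in> S') \<and> (\<forall>T\<subseteq>S. h (c_lub S T) = c_lub S' (h ` T))"

text \<open>A locale map f : X \<rightarrow> Y, given by its inverse image fi : O(Y) \<rightarrow> O(X), is open iff fi
  has a left adjoint (the direct image f_!) satisfying the Frobenius reciprocity condition.\<close>

definition open_dimage :: "'x::complete_lattice set \<Rightarrow> 'y::complete_lattice set \<Rightarrow> ('y \<Rightarrow> 'x) \<Rightarrow> ('x \<Rightarrow> 'y) \<Rightarrow> bool" where
  "open_dimage SX SY fi fs \<longleftrightarrow> frame_hom SY SX fi \<and> (\<forall>x\<in>SX. fs x \<in> SY) \<and>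
     (\<forall>x\<in>SX. \<forall>y\<in>SY. fs x \<le> y \<longleftrightarrow> x \<le> fi y) \<and>
     (\<forall>x\<in>SX. \<forall>y\<in>SY. fs (c_meet SX x (fi y)) = c_meet SY (fs x) y)"

definition open_map :: "'x::complete_lattice set \<Rightarrow> 'y::complete_lattice set \<Rightarrow> ('y \<Rightarrow> 'x) \<Rightarrow> bool" where
  "open_map SX SY fi \<longleftrightarrow> (\<exists>fs. open_dimage SX SY fi fs)"

text \<open>Open surjection: open map whose inverse image is injective (i.e. an epimorphism of locales).\<close>
definition open_surjection :: "'x::complete_lattice set \<Rightarrow> 'y::complete_lattice set \<Rightarrow> ('y \<Rightarrow> 'x) \<Rightarrow> bool" where
  "open_surjection SX SY fi \<longleftrightarrow> open_map SX SY fi \<and> inj_on fi SY"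

section \<open>Tensor products of sup-lattices over a base, as sets of C-ideals\<close>

definition cideal :: "'l::complete_lattice set \<Rightarrow> 'r::complete_lattice set \<Rightarrow> ('l \<times> 'r) set \<Rightarrow> bool" where
  "cideal L R D \<longleftrightarrow> D \<subseteq> L \<times> R \<and>
     (\<forall>l r l' r'. (l, r) \<in> D \<and> l' \<in> L \<and> r' \<in> R \<and> l' \<le> l \<and> r' \<le> r \<longrightarrow> (l', r') \<in> D) \<and>
     (\<forall>T r. T \<subseteq> L \<and> r \<in> R \<and> (\<forall>t\<in>T. (t, r) \<in> D) \<longrightarrow> (c_lub L T, r) \<in> D) \<and>
     (\<forall>l T. l \<in> L \<and> T \<subseteq> R \<and> (\<forall>t\<in>T. (l, t) \<in> D) \<longrightarrow> (l, c_lub R T) \<in> D)"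

text \<open>L \<otimes>_B R: the quotient of the sup-lattice tensor L \<otimes> R by the relations
  (fl b l) \<otimes> r = l \<otimes> (fr b r), for b \<in> B, presented as the set of C-ideals saturated
  with respect to these relations (ordered by inclusion).\<close>

definition tensor :: "'l::complete_lattice set \<Rightarrow> 'r::complete_lattice set \<Rightarrow>
    ('b \<Rightarrow> 'l \<Rightarrow> 'l) \<Rightarrow> ('b \<Rightarrow> 'r \<Rightarrow> 'r) \<Rightarrow> 'b set \<Rightarrow> ('l \<times> 'r) set set" where
  "tensor L R fl fr B = {D. cideal L R D \<and>
     (\<forall>b\<in>B. \<forall>l\<in>L. \<forall>r\<in>R. (fl b l, r) \<in> D \<longleftrightarrow> (l, fr b r) \<in> D)}"

text \<open>The generator l \<otimes> r of a tensor T.\<close>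
definition tel :: "('l \<times> 'r) set set \<Rightarrow> 'l \<Rightarrow> 'r \<Rightarrow> ('l \<times> 'r) set" where
  "tel T l r = c_glb T {D \<in> T. (l, r) \<in> D}"

text \<open>Frame pushout L \<otimes>_{O(B)} R of frame homomorphisms f : O(B) \<rightarrow> L and g : O(B) \<rightarrow> R,
  where O(B) is the whole type 'b; this is the frame of the fibred product of locales.\<close>
definition pushout :: "'l::complete_lattice set \<Rightarrow> 'r::complete_lattice set \<Rightarrow>
    ('b::complete_lattice \<Rightarrow> 'l) \<Rightarrow> ('b \<Rightarrow> 'r) \<Rightarrow> ('l \<times> 'r) set set" where
  "pushout L R f g = tensor L R (\<lambda>b l. c_meet L (f b) l) (\<lambda>b r. c_meet R (g b) r) UNIV"

text \<open>Inverse images of the two projections out of a fibred product with carriers L, R.\<close>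
definition inj1 :: "('l \<times> 'r) set set \<Rightarrow> 'l set \<Rightarrow> 'r::complete_lattice set \<Rightarrow> 'l \<Rightarrow> ('l \<times> 'r) set" where
  "inj1 T L R l = tel T l (c_top R)"

definition inj2 :: "('l \<times> 'r) set set \<Rightarrow> 'l::complete_lattice set \<Rightarrow> 'r set \<Rightarrow> 'r \<Rightarrow> ('l \<times> 'r) set" where
  "inj2 T L R r = tel T (c_top L) r"

text \<open>Inverse image of the pairing map induced by two maps into the factors:
  the unique frame map sending l \<otimes> r to f l \<and> g r.\<close>
definition copair :: "('l \<times> 'r) set set \<Rightarrow> 's::complete_lattice set \<Rightarrow> ('l \<Rightarrow> 's) \<Rightarrow> ('r \<Rightarrow> 's) \<Rightarrow>
    ('l \<times> 'r) set \<Rightarrow> 's" where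
  "copair T S f g D = c_lub S {c_meet S (f l) (g r) | l r. (l, r) \<in> D}"

definition sup_preserving :: "('a::complete_lattice \<Rightarrow> 'b::complete_lattice) \<Rightarrow> bool" where
  "sup_preserving f \<longleftrightarrow> (\<forall>S. f (Sup S) = Sup (f ` S))"

definition involutive_quantale :: "('q::complete_lattice \<Rightarrow> 'q \<Rightarrow> 'q) \<Rightarrow> ('q \<Rightarrow> 'q) \<Rightarrow> bool" where
  "involutive_quantale mul invo \<longleftrightarrow>
     (\<forall>x y z. mul (mul x y) z = mul x (mul y z)) \<and>
     (\<forall>x S. mul x (Sup S) = Sup (mul x ` S)) \<and>
     (\<forall>S y. mul (Sup S) y = Sup ((\<lambda>x. mul x y) ` S)) \<and>
     (\<forall>x. invo (invo x) = x) \<and> (\<forall>x y. invo (mul x y) = mul (invo y) (invo x)) \<and>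
     sup_preserving invo"

text \<open>Left module over the quantale (A, \<and>) of a locale A (not assumed unital).\<close>
definition left_A_module :: "('a::complete_lattice \<Rightarrow> 'm::complete_lattice \<Rightarrow> 'm) \<Rightarrow> bool" where
  "left_A_module act \<longleftrightarrow>
     (\<forall>a S. act a (Sup S) = Sup (act a ` S)) \<and>
     (\<forall>S m. act (Sup S) m = Sup ((\<lambda>a. act a m) ` S)) \<and>
     (\<forall>a b m. act (inf a b) m = act a (act b m))"

definition right_A_module :: "('m::complete_lattice \<Rightarrow> 'a::complete_lattice \<Rightarrow> 'm) \<Rightarrow> bool" where
  "right_A_module act \<longleftrightarrow>
     (\<forall>a S. act (Sup S) a = Sup ((\<lambda>m. act m a) ` S)) \<and>
     (\<forall>S m. act m (Sup S) = Sup (act m ` S)) \<and>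
     (\<forall>a b m. act m (inf a b) = act (act m a) b)"

text \<open>The frame Q \<otimes>_A Q (relations (x \<triangleleft> a) \<otimes> y = x \<otimes> (a \<triangleright> y)) and the multiplication map
  Q \<otimes>_A Q \<rightarrow> Q together with its right adjoint.\<close>
definition QQ_tensor :: "('a \<Rightarrow> 'q \<Rightarrow> 'q) \<Rightarrow> ('q \<Rightarrow> 'a \<Rightarrow> 'q) \<Rightarrow> ('q::complete_lattice \<times> 'q) set set" where
  "QQ_tensor lact ract = tensor UNIV UNIV (\<lambda>a x. ract x a) lact UNIV"

definition mult_map :: "('q::complete_lattice \<Rightarrow> 'q \<Rightarrow> 'q) \<Rightarrow> ('q \<times> 'q) set \<Rightarrow> 'q" where
  "mult_map mul D = Sup {mul x y | x y. (x, y) \<in> D}"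

definition mult_radj :: "('q::complete_lattice \<Rightarrow> 'q \<Rightarrow> 'q) \<Rightarrow> ('a \<Rightarrow> 'q \<Rightarrow> 'q) \<Rightarrow> ('q \<Rightarrow> 'a \<Rightarrow> 'q) \<Rightarrow>
    'q \<Rightarrow> ('q \<times> 'q) set" where
  "mult_radj mul lact ract q =
     c_lub (QQ_tensor lact ract) {D \<in> QQ_tensor lact ract. mult_map mul D \<le> q}"

definition groupoid_quantale ::
  "('q::complete_lattice \<Rightarrow> 'q \<Rightarrow> 'q) \<Rightarrow> ('q \<Rightarrow> 'q) \<Rightarrow> ('a::complete_lattice \<Rightarrow> 'q \<Rightarrow> 'q) \<Rightarrow>
   ('q \<Rightarrow> 'a \<Rightarrow> 'q) \<Rightarrow> ('q \<Rightarrow> 'a) \<Rightarrow> ('q \<Rightarrow> 'a) \<Rightarrow> bool" where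
  "groupoid_quantale mul invo lact ract sig ups \<longleftrightarrow>
     is_frame (UNIV :: 'a set) \<and>
     involutive_quantale mul invo \<and>
     left_A_module lact \<and> right_A_module ract \<and>
     (\<forall>a b x. ract (lact a x) b = lact a (ract x b)) \<and>
     (\<forall>a x y. mul (lact a x) y = lact a (mul x y)) \<and>
     (\<forall>a x y. mul (ract x a) y = mul x (lact a y)) \<and>
     (\<forall>a x y. ract (mul x y) a = mul x (ract y a)) \<and>
     (\<forall>a b x. invo (lact a (ract x b)) = lact b (ract (invo x) a)) \<and>
     is_frame (UNIV :: 'q set) \<and>
     (\<forall>a q m. inf (lact a q) m = lact a (inf q m)) \<and>
     (\<forall>a q m. inf m (ract q a) = ract (inf q m) a) \<and>
     sup_preserving sig \<and> sig top = top \<and>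
     (\<forall>x y. lact (sig x) y \<le> mul (mul x (invo x)) y) \<and>
     (\<forall>x. lact (sig x) x = x) \<and>
     (\<forall>a x. sig (lact a x) = inf a (sig x)) \<and>
     frame_hom UNIV UNIV ups \<and>
     (\<forall>a. ups (lact a top) = a \<and> ups (ract top a) = a) \<and>
     sup_hom UNIV (QQ_tensor lact ract) (mult_radj mul lact ract) \<and>
     (\<forall>q. Sup {lact (ups x) y | x y. mul x y \<le> q} = q) \<and>
     (\<forall>q. lact (ups q) top = Sup {x. mul x (invo x) \<le> q})"

text \<open>Q \<otimes>_A X (relations (q \<triangleleft> a) \<otimes> x = q \<otimes> (a \<triangleright> x)).\<close>
definition QX_tensor :: "('q::complete_lattice \<Rightarrow> 'a \<Rightarrow> 'q) \<Rightarrow> ('a \<Rightarrow> 'x::complete_lattice \<Rightarrow> 'x) \<Rightarrow>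
    ('q \<times> 'x) set set" where
  "QX_tensor ract xact = tensor UNIV UNIV (\<lambda>a q. ract q a) xact UNIV"

definition alpha_star :: "('q::complete_lattice \<Rightarrow> 'a \<Rightarrow> 'q) \<Rightarrow> ('a \<Rightarrow> 'x::complete_lattice \<Rightarrow> 'x) \<Rightarrow>
    ('q \<Rightarrow> 'x \<Rightarrow> 'x) \<Rightarrow> 'x \<Rightarrow> ('q \<times> 'x) set" where
  "alpha_star ract xact qact x =
     c_lub (QX_tensor ract xact) {tel (QX_tensor ract xact) q y | q y. qact q y \<le> x}"

definition Q_module ::
  "('q::complete_lattice \<Rightarrow> 'q \<Rightarrow> 'q) \<Rightarrow> ('a::complete_lattice \<Rightarrow> 'q \<Rightarrow> 'q) \<Rightarrow> ('q \<Rightarrow> 'a \<Rightarrow> 'q) \<Rightarrow>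
   ('q \<Rightarrow> 'x::complete_lattice \<Rightarrow> 'x) \<Rightarrow> ('a \<Rightarrow> 'x \<Rightarrow> 'x) \<Rightarrow> bool" where
  "Q_module mul lact ract qact xact \<longleftrightarrow>
     is_frame (UNIV :: 'x set) \<and>
     (\<forall>q S. qact q (Sup S) = Sup (qact q ` S)) \<and>
     (\<forall>S x. qact (Sup S) x = Sup ((\<lambda>q. qact q x) ` S)) \<and>
     (\<forall>p q x. qact (mul p q) x = qact p (qact q x)) \<and>
     left_A_module xact \<and> (\<forall>x. xact top x = x) \<and>
     (\<forall>a q x. qact (lact a q) x = xact a (qact q x)) \<and>
     (\<forall>a q x. qact (ract q a) x = qact q (xact a x)) \<and>
     (\<forall>a x y. xact a (inf x y) = inf (xact a x) y)"

definition pre_Hilbert ::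
  "('q::complete_lattice \<Rightarrow> 'q \<Rightarrow> 'q) \<Rightarrow> ('q \<Rightarrow> 'q) \<Rightarrow> ('a::complete_lattice \<Rightarrow> 'q \<Rightarrow> 'q) \<Rightarrow> ('q \<Rightarrow> 'a \<Rightarrow> 'q) \<Rightarrow>
   ('q \<Rightarrow> 'x::complete_lattice \<Rightarrow> 'x) \<Rightarrow> ('a \<Rightarrow> 'x \<Rightarrow> 'x) \<Rightarrow> ('x \<Rightarrow> 'x \<Rightarrow> 'q) \<Rightarrow> bool" where
  "pre_Hilbert mul invo lact ract qact xact ip \<longleftrightarrow>
     Q_module mul lact ract qact xact \<and>
     (\<forall>q x y. ip (qact q x) y = mul q (ip x y)) \<and>
     (\<forall>a x. lact a (ip x top) = ip (xact a x) top) \<and>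
     (\<forall>S y. ip (Sup S) y = Sup ((\<lambda>x. ip x y) ` S)) \<and>
     (\<forall>x y. ip x y = invo (ip y x))"

definition stably_supported ::
  "('q::complete_lattice \<Rightarrow> 'q \<Rightarrow> 'q) \<Rightarrow> ('q \<Rightarrow> 'q) \<Rightarrow> ('a::complete_lattice \<Rightarrow> 'q \<Rightarrow> 'q) \<Rightarrow> ('q \<Rightarrow> 'a \<Rightarrow> 'q) \<Rightarrow>
   ('q \<Rightarrow> 'a) \<Rightarrow> ('q \<Rightarrow> 'x::complete_lattice \<Rightarrow> 'x) \<Rightarrow> ('a \<Rightarrow> 'x \<Rightarrow> 'x) \<Rightarrow> ('x \<Rightarrow> 'x \<Rightarrow> 'q) \<Rightarrow>
   ('x \<Rightarrow> 'a) \<Rightarrow> bool" where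
  "stably_supported mul invo lact ract sigQ qact xact ip sigX \<longleftrightarrow>
     pre_Hilbert mul invo lact ract qact xact ip \<and>
     mono sigX \<and> sigX top = top \<and>
     (\<forall>x. xact (sigX x) top \<le> qact (ip x x) top) \<and>
     (\<forall>x. xact (sigX x) x = x) \<and>
     (\<forall>q x. sigX (qact q x) \<le> sigQ q)"

definition Q_locale ::
  "('q::complete_lattice \<Rightarrow> 'q \<Rightarrow> 'q) \<Rightarrow> ('q \<Rightarrow> 'q) \<Rightarrow> ('a::complete_lattice \<Rightarrow> 'q \<Rightarrow> 'q) \<Rightarrow> ('q \<Rightarrow> 'a \<Rightarrow> 'q) \<Rightarrow>
   ('q \<Rightarrow> 'a) \<Rightarrow> ('q \<Rightarrow> 'a) \<Rightarrow> ('q \<Rightarrow> 'x::complete_lattice \<Rightarrow> 'x) \<Rightarrow> ('a \<Rightarrow> 'x \<Rightarrow> 'x) \<Rightarrow>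
   ('x \<Rightarrow> 'x \<Rightarrow> 'q) \<Rightarrow> ('x \<Rightarrow> 'a) \<Rightarrow> bool" where
  "Q_locale mul invo lact ract sigQ ups qact xact ip sigX \<longleftrightarrow>
     stably_supported mul invo lact ract sigQ qact xact ip sigX \<and>
     sup_hom UNIV (QX_tensor ract xact) (alpha_star ract xact qact) \<and>
     (\<forall>x. Sup {xact (ups q) y | q y. qact q y \<le> x} = x)"

text \<open>X \<otimes>_M X for the locale map \<pi> : X \<rightarrow> M with inverse image piS.\<close>
definition XX_tensor :: "('m::complete_lattice \<Rightarrow> 'x::complete_lattice) \<Rightarrow> ('x \<times> 'x) set set" where
  "XX_tensor piS = pushout UNIV UNIV piS piS"

definition phi_map :: "('q::complete_lattice \<Rightarrow> 'a \<Rightarrow> 'q) \<Rightarrow> ('a \<Rightarrow> 'x::complete_lattice \<Rightarrow> 'x) \<Rightarrow>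
    ('q \<Rightarrow> 'x \<Rightarrow> 'x) \<Rightarrow> ('x \<times> 'x) set \<Rightarrow> ('q \<times> 'x) set" where
  "phi_map ract xact qact D =
     c_lub (QX_tensor ract xact)
       {tel (QX_tensor ract xact) q (inf z y) | q z x y. (x, y) \<in> D \<and> qact q z \<le> x}"

definition principal_Q_locale ::
  "('q::complete_lattice \<Rightarrow> 'q \<Rightarrow> 'q) \<Rightarrow> ('q \<Rightarrow> 'q) \<Rightarrow> ('a::complete_lattice \<Rightarrow> 'q \<Rightarrow> 'q) \<Rightarrow> ('q \<Rightarrow> 'a \<Rightarrow> 'q) \<Rightarrow>
   ('q \<Rightarrow> 'a) \<Rightarrow> ('q \<Rightarrow> 'a) \<Rightarrow> ('q \<Rightarrow> 'x::complete_lattice \<Rightarrow> 'x) \<Rightarrow> ('a \<Rightarrow> 'x \<Rightarrow> 'x) \<Rightarrow>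
   ('x \<Rightarrow> 'x \<Rightarrow> 'q) \<Rightarrow> ('x \<Rightarrow> 'a) \<Rightarrow> ('m::complete_lattice \<Rightarrow> 'x) \<Rightarrow> ('x \<Rightarrow> 'm) \<Rightarrow> bool" where
  "principal_Q_locale mul invo lact ract sigQ ups qact xact ip sigX piS sigt \<longleftrightarrow>
     Q_locale mul invo lact ract sigQ ups qact xact ip sigX \<and>
     is_frame (UNIV :: 'm set) \<and>
     open_dimage UNIV UNIV piS sigt \<and> sigt top = top \<and>
     (\<forall>q x. sigt (qact q x) = sigt (xact (sigQ (invo q)) x)) \<and>
     frame_iso (XX_tensor piS) (QX_tensor ract xact) (phi_map ract xact qact)"

text \<open>The (open) groupoid G is given by its frames O(G_0) = 'a (whole type), O(G_1) = 'q
  (whole type) and the inverse images dS, rS : O(G_0) \<rightarrow> O(G_1), uS : O(G_1) \<rightarrow> O(G_0),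
  mS : O(G_1) \<rightarrow> O(G_2) of domain, range, unit and multiplication.  Convention (the one
  of the quantale Q = O(G)): G_2 = G_1 \<times>_{G_0} G_1 is the pullback of r and d,
  and for a G-locale X with anchor p, G_1 \<times>_{G_0} X is the pullback of r and p.\<close>

definition G2_frame :: "('a::complete_lattice \<Rightarrow> 'q::complete_lattice) \<Rightarrow> ('a \<Rightarrow> 'q) \<Rightarrow> ('q \<times> 'q) set set" where
  "G2_frame dS rS = pushout UNIV UNIV rS dS"

definition G1X_frame :: "('a::complete_lattice \<Rightarrow> 'q::complete_lattice) \<Rightarrow> ('a \<Rightarrow> 'x::complete_lattice) \<Rightarrow>
    ('q \<times> 'x) set set" where
  "G1X_frame rS pS = pushout UNIV UNIV rS pS"

text \<open>G_2 \<times>_{G_0} X: triples (g, h, x) with r(h) = p(x).\<close>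
definition G2X_frame :: "('a::complete_lattice \<Rightarrow> 'q::complete_lattice) \<Rightarrow> ('a \<Rightarrow> 'q) \<Rightarrow>
    ('a \<Rightarrow> 'x::complete_lattice) \<Rightarrow> (('q \<times> 'q) set \<times> 'x) set set" where
  "G2X_frame dS rS pS =
     pushout (G2_frame dS rS) UNIV (\<lambda>a. inj2 (G2_frame dS rS) UNIV UNIV (rS a)) pS"

definition G_locale ::
  "('a::complete_lattice \<Rightarrow> 'q::complete_lattice) \<Rightarrow> ('a \<Rightarrow> 'q) \<Rightarrow> ('q \<Rightarrow> 'a) \<Rightarrow> ('q \<Rightarrow> ('q \<times> 'q) set) \<Rightarrow>
   ('a \<Rightarrow> 'x::complete_lattice) \<Rightarrow> ('x \<Rightarrow> ('q \<times> 'x) set) \<Rightarrow> bool" where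
  "G_locale dS rS uS mS pS actS \<longleftrightarrow>
     (let G1X = G1X_frame rS pS; G2 = G2_frame dS rS; G2X = G2X_frame dS rS pS;
          \<pi>23 = copair G1X G2X (\<lambda>q. inj1 G2X G2 UNIV (inj2 G2 UNIV UNIV q)) (inj2 G2X G2 UNIV);
          m_id = copair G1X G2X (\<lambda>q. inj1 G2X G2 UNIV (mS q)) (inj2 G2X G2 UNIV);
          id_a = copair G1X G2X (\<lambda>q. inj1 G2X G2 UNIV (inj1 G2 UNIV UNIV q)) (\<lambda>x. \<pi>23 (actS x));
          up_id = copair G1X UNIV (\<lambda>q. pS (uS q)) id
      in is_frame (UNIV :: 'x set) \<and>
         frame_hom UNIV UNIV pS \<and>
         frame_hom UNIV G1X actS \<and>
         (\<forall>b. actS (pS b) = inj1 G1X UNIV UNIV (dS b)) \<and>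
         (\<forall>x. m_id (actS x) = id_a (actS x)) \<and>
         (\<forall>x. up_id (actS x) = x))"

definition fully_open_principal_G_bundle ::
  "('a::complete_lattice \<Rightarrow> 'q::complete_lattice) \<Rightarrow> ('a \<Rightarrow> 'q) \<Rightarrow> ('q \<Rightarrow> 'a) \<Rightarrow> ('q \<Rightarrow> ('q \<times> 'q) set) \<Rightarrow>
   ('a \<Rightarrow> 'x::complete_lattice) \<Rightarrow> ('x \<Rightarrow> ('q \<times> 'x) set) \<Rightarrow> ('m::complete_lattice \<Rightarrow> 'x) \<Rightarrow> bool" where
  "fully_open_principal_G_bundle dS rS uS mS pS actS piS \<longleftrightarrow>
     (let G1X = G1X_frame rS pS; XMX = pushout UNIV UNIV piS piS
      in G_locale dS rS uS mS pS actS \<and>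
         is_frame (UNIV :: 'm set) \<and>
         frame_hom UNIV UNIV piS \<and>
         (\<forall>m. actS (piS m) = inj2 G1X UNIV UNIV (piS m)) \<and>
         frame_iso XMX G1X (copair XMX G1X actS (inj2 G1X UNIV UNIV)) \<and>
         open_surjection UNIV UNIV piS \<and>
         open_surjection UNIV UNIV pS)"

end

theory Submission
  imports Defs
begin

lemma c_is_lub_UNIV: "c_is_lub UNIV T x \<longleftrightarrow> x = Sup T"
  unfolding c_is_lub_def by (auto intro: Sup_least Sup_upper antisym)

lemma c_lub_UNIV[simp]: "c_lub UNIV T = Sup T"
  unfolding c_lub_def c_is_lub_UNIV by simp

lemma c_is_glb_UNIV: "c_is_glb UNIV T x \<longleftrightarrow> x = Inf T"
  unfolding c_is_glb_def by (auto intro: Inf_greatest Inf_lower antisym)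

lemma c_glb_UNIV[simp]: "c_glb UNIV T = Inf T"
  unfolding c_glb_def c_is_glb_UNIV by simp

lemma c_meet_UNIV[simp]: "c_meet UNIV x y = inf x y"
  unfolding c_meet_def by simp

lemma c_top_UNIV[simp]: "c_top UNIV = top"
  unfolding c_top_def by simp

lemma frame_distrib: "is_frame (UNIV::'a::complete_lattice set) \<Longrightarrow> inf (a::'a) (Sup T) = Sup (inf a ` T)"
  unfolding is_frame_def by simp

definition moore :: "'a set set \<Rightarrow> 'a set \<Rightarrow> bool" where
  "moore F U \<longleftrightarrow> U \<in> F \<and> (\<forall>D\<in>F. D \<subseteq> U) \<and> (\<forall>G\<subseteq>F. G \<noteq> {} \<longrightarrow> \<Inter>G \<in> F)"

lemma moore_is_lub:
  assumes "moore F U" "\<Union>S \<subseteq> U"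
  shows "c_is_lub F S (\<Inter>{D\<in>F. \<Union>S \<subseteq> D})"
proof -
  have "U \<in> {D\<in>F. \<Union>S \<subseteq> D}" using assms unfolding moore_def by auto
  then have "\<Inter>{D\<in>F. \<Union>S \<subseteq> D} \<in> F" using assms unfolding moore_def
    by (metis (no_types, lifting) empty_iff mem_Collect_eq subsetI)
  then show ?thesis unfolding c_is_lub_def by auto
qed

lemma moore_lub:
  assumes "moore F U" "\<Union>S \<subseteq> U"
  shows "c_lub F S = \<Inter>{D\<in>F. \<Union>S \<subseteq> D}"
proof -
  have "c_is_lub F S y \<Longrightarrow> y = \<Inter>{D\<in>F. \<Union>S \<subseteq> D}" for y
    using moore_is_lub[OF assms] unfolding c_is_lub_def by (meson subset_antisym)
  then show ?thesis unfolding c_lub_def using moore_is_lub[OF assms] by (rule the_equality[rotated])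
qed

lemma moore_is_glb:
  assumes "moore F U" "S \<subseteq> F"
  shows "c_is_glb F S (U \<inter> \<Inter>S)"
proof -
  have "U \<inter> \<Inter>S \<in> F"
  proof (cases "S = {}")
    case True then show ?thesis using assms unfolding moore_def by auto
  next
    case False
    then have "\<Inter>S \<subseteq> U" using assms unfolding moore_def by blast
    then show ?thesis using assms False unfolding moore_def by (simp add: Int_absorb1)
  qed
  then show ?thesis unfolding c_is_glb_def using assms unfolding moore_def by auto
qed

lemma moore_glb:
  assumes "moore F U" "S \<subseteq> F"
  shows "c_glb F S = U \<inter> \<Inter>S"
proof -
  have "c_is_glb F S y \<Longrightarrow> y = U \<inter> \<Inter>S" for y
    using moore_is_glb[OF assms] unfolding c_is_glb_def by (meson subset_antisym)
  then show ?thesis unfolding c_glb_def using moore_is_glb[OF assms] by (rule the_equality[rotated])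
qed

lemma moore_top: "moore F U \<Longrightarrow> c_top F = U"
proof -
  assume a: "moore F U"
  then have u: "\<Union>F = U" unfolding moore_def by auto
  have "c_lub F F = \<Inter>{D\<in>F. \<Union>F \<subseteq> D}" using a u by (intro moore_lub) auto
  also have "\<dots> = U" using a u unfolding moore_def by auto
  finally show ?thesis unfolding c_top_def .
qed

lemma moore_meet: "moore F U \<Longrightarrow> A \<in> F \<Longrightarrow> B \<in> F \<Longrightarrow> c_meet F A B = A \<inter> B"
proof -
  assume a: "moore F U" "A \<in> F" "B \<in> F"
  then have "c_glb F {A, B} = U \<inter> \<Inter>{A,B}" by (intro moore_glb) auto
  moreover have "A \<subseteq> U" using a unfolding moore_def by auto
  ultimately show ?thesis unfolding c_meet_def by auto
qed

lemma moore_meet_mem: "moore F U \<Longrightarrow> A \<in> F \<Longrightarrow> B \<in> F \<Longrightarrow> A \<inter> B \<in> F"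
proof -
  assume a: "moore F U" "A \<in> F" "B \<in> F"
  then have "\<forall>G\<subseteq>F. G \<noteq> {} \<longrightarrow> \<Inter>G \<in> F" unfolding moore_def by simp
  then have "\<Inter>{A,B} \<in> F" using a by (metis empty_not_insert insert_subsetI empty_subsetI)
  then show ?thesis by simp
qed

lemma moore_lub_mem: "moore F U \<Longrightarrow> \<Union>S \<subseteq> U \<Longrightarrow> c_lub F S \<in> F"
proof -
  assume a: "moore F U" "\<Union>S \<subseteq> U"
  from moore_is_lub[OF a] have "\<Inter>{D\<in>F. \<Union>S \<subseteq> D} \<in> F" unfolding c_is_lub_def by simp
  then show ?thesis using moore_lub[OF a] by simp
qed

lemma moore_lub_upper: "moore F U \<Longrightarrow> \<Union>S \<subseteq> U \<Longrightarrow> s \<in> S \<Longrightarrow> s \<subseteq> c_lub F S"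
  by (subst moore_lub) auto

lemma moore_lub_least: "moore F U \<Longrightarrow> \<Union>S \<subseteq> U \<Longrightarrow> D \<in> F \<Longrightarrow> (\<And>s. s \<in> S \<Longrightarrow> s \<subseteq> D) \<Longrightarrow> c_lub F S \<subseteq> D"
proof -
  assume a: "moore F U" "\<Union>S \<subseteq> U" "D \<in> F" "\<And>s. s \<in> S \<Longrightarrow> s \<subseteq> D"
  then have "D \<in> {D\<in>F. \<Union>S \<subseteq> D}" by auto
  then have "\<Inter>{D\<in>F. \<Union>S \<subseteq> D} \<subseteq> D" by (rule Inter_lower)
  with moore_lub[OF a(1,2)] show ?thesis by simp
qed

lemma moore_tel: "moore F U \<Longrightarrow> tel F l r = U \<inter> \<Inter>{D\<in>F. (l,r)\<in>D}"
  unfolding tel_def by (subst moore_glb) auto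

lemma moore_tel_mem: "moore F U \<Longrightarrow> tel F l r \<in> F"
  using moore_is_glb[of F U "{D\<in>F. (l,r)\<in>D}"] unfolding tel_def c_is_glb_def
  by (metis (no_types, lifting) mem_Collect_eq moore_glb subsetI)

lemma moore_tel_in: "moore F U \<Longrightarrow> (l,r) \<in> U \<Longrightarrow> (l,r) \<in> tel F l r"
  by (subst moore_tel) auto

lemma moore_tel_least: "moore F U \<Longrightarrow> D \<in> F \<Longrightarrow> (l,r) \<in> D \<Longrightarrow> tel F l r \<subseteq> D"
  by (subst moore_tel) auto

lemma moore_sub: "moore F U \<Longrightarrow> D \<in> F \<Longrightarrow> D \<subseteq> U"
  unfolding moore_def by auto

lemma moore_lub_eq:
  assumes "moore F U" "\<Union>S1 \<subseteq> U" "\<Union>S2 \<subseteq> U"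
    "\<And>s. s \<in> S1 \<Longrightarrow> s \<subseteq> c_lub F S2" "\<And>s. s \<in> S2 \<Longrightarrow> s \<subseteq> c_lub F S1"
  shows "c_lub F S1 = c_lub F S2"
  using assms by (meson moore_lub_least moore_lub_mem subset_antisym)

lemma tensorD:
  assumes "D \<in> tensor L R fl fr B"
  shows tensorD_sub: "D \<subseteq> L \<times> R"
    and tensorD_down: "\<And>l r l' r'. (l, r) \<in> D \<Longrightarrow> l' \<in> L \<Longrightarrow> r' \<in> R \<Longrightarrow> l' \<le> l \<Longrightarrow> r' \<le> r \<Longrightarrow> (l', r') \<in> D"
    and tensorD_lub1: "\<And>T r. T \<subseteq> L \<Longrightarrow> r \<in> R \<Longrightarrow> (\<And>t. t\<in>T \<Longrightarrow> (t, r) \<in> D) \<Longrightarrow> (c_lub L T, r) \<in> D"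
    and tensorD_lub2: "\<And>l T. l \<in> L \<Longrightarrow> T \<subseteq> R \<Longrightarrow> (\<And>t. t\<in>T \<Longrightarrow> (l, t) \<in> D) \<Longrightarrow> (l, c_lub R T) \<in> D"
    and tensorD_sat: "\<And>b l r. b \<in> B \<Longrightarrow> l \<in> L \<Longrightarrow> r \<in> R \<Longrightarrow> (fl b l, r) \<in> D \<longleftrightarrow> (l, fr b r) \<in> D"
proof -
  have c: "cideal L R D" and s: "\<forall>b\<in>B. \<forall>l\<in>L. \<forall>r\<in>R. (fl b l, r) \<in> D \<longleftrightarrow> (l, fr b r) \<in> D"
    using assms unfolding tensor_def by auto
  show "D \<subseteq> L \<times> R" using c unfolding cideal_def by simp
  show "\<And>l r l' r'. (l, r) \<in> D \<Longrightarrow> l' \<in> L \<Longrightarrow> r' \<in> R \<Longrightarrow> l' \<le> l \<Longrightarrow> r' \<le> r \<Longrightarrow> (l', r') \<in> D"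
    using c unfolding cideal_def by metis
  show "\<And>T r. T \<subseteq> L \<Longrightarrow> r \<in> R \<Longrightarrow> (\<And>t. t\<in>T \<Longrightarrow> (t, r) \<in> D) \<Longrightarrow> (c_lub L T, r) \<in> D"
    using c unfolding cideal_def by metis
  show "\<And>l T. l \<in> L \<Longrightarrow> T \<subseteq> R \<Longrightarrow> (\<And>t. t\<in>T \<Longrightarrow> (l, t) \<in> D) \<Longrightarrow> (l, c_lub R T) \<in> D"
    using c unfolding cideal_def by metis
  show "\<And>b l r. b \<in> B \<Longrightarrow> l \<in> L \<Longrightarrow> r \<in> R \<Longrightarrow> (fl b l, r) \<in> D \<longleftrightarrow> (l, fr b r) \<in> D"
    using s by blast
qed

lemma tensorI:
  assumes "D \<subseteq> L \<times> R"
    "\<And>l r l' r'. (l, r) \<in> D \<Longrightarrow> l' \<in> L \<Longrightarrow> r' \<in> R \<Longrightarrow> l' \<le> l \<Longrightarrow> r' \<le> r \<Longrightarrow> (l', r') \<in> D"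
    "\<And>T r. T \<subseteq> L \<Longrightarrow> r \<in> R \<Longrightarrow> (\<And>t. t\<in>T \<Longrightarrow> (t, r) \<in> D) \<Longrightarrow> (c_lub L T, r) \<in> D"
    "\<And>l T. l \<in> L \<Longrightarrow> T \<subseteq> R \<Longrightarrow> (\<And>t. t\<in>T \<Longrightarrow> (l, t) \<in> D) \<Longrightarrow> (l, c_lub R T) \<in> D"
    "\<And>b l r. b \<in> B \<Longrightarrow> l \<in> L \<Longrightarrow> r \<in> R \<Longrightarrow> (fl b l, r) \<in> D \<longleftrightarrow> (l, fr b r) \<in> D"
  shows "D \<in> tensor L R fl fr B"
  unfolding tensor_def cideal_def
proof (intro CollectI conjI allI impI ballI)
  show "D \<subseteq> L \<times> R" by (rule assms(1))
next
  fix l r l' r' assume "(l, r) \<in> D \<and> l' \<in> L \<and> r' \<in> R \<and> l' \<le> l \<and> r' \<le> r"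
  then show "(l', r') \<in> D" using assms(2) by blast
next
  fix T r assume "T \<subseteq> L \<and> r \<in> R \<and> (\<forall>t\<in>T. (t, r) \<in> D)"
  then show "(c_lub L T, r) \<in> D" using assms(3) by blast
next
  fix l T assume "l \<in> L \<and> T \<subseteq> R \<and> (\<forall>t\<in>T. (l, t) \<in> D)"
  then show "(l, c_lub R T) \<in> D" using assms(4) by blast
next
  fix b l r assume "b \<in> B" "l \<in> L" "r \<in> R"
  then show "(fl b l, r) \<in> D \<longleftrightarrow> (l, fr b r) \<in> D" using assms(5) by blast
qed

lemma tensor_moore:
  assumes "\<And>T. T \<subseteq> L \<Longrightarrow> c_lub L T \<in> L" "\<And>T. T \<subseteq> R \<Longrightarrow> c_lub R T \<in> R"
    "\<And>b l. b \<in> B \<Longrightarrow> l \<in> L \<Longrightarrow> fl b l \<in> L" "\<And>b r. b \<in> B \<Longrightarrow> r \<in> R \<Longrightarrow> fr b r \<in> R"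
  shows "moore (tensor L R fl fr B) (L \<times> R)"
  unfolding moore_def
proof (intro conjI ballI allI impI)
  show "L \<times> R \<in> tensor L R fl fr B"
    by (rule tensorI) (use assms in auto)
  show "D \<subseteq> L \<times> R" if "D \<in> tensor L R fl fr B" for D
    using that by (rule tensorD_sub)
  fix G assume G: "G \<subseteq> tensor L R fl fr B" "G \<noteq> {}"
  then obtain D0 where D0: "D0 \<in> G" by auto
  have sub: "\<Inter>G \<subseteq> L \<times> R"
  proof -
    have "\<Inter>G \<subseteq> D0" using D0 by (rule Inter_lower)
    also have "D0 \<subseteq> L \<times> R" using D0 G(1) by (intro tensorD_sub) auto
    finally show ?thesis .
  qed
  show "\<Inter>G \<in> tensor L R fl fr B"
  proof (rule tensorI[OF sub])
    fix l r l' r' assume h: "(l, r) \<in> \<Inter> G" "l' \<in> L" "r' \<in> R" "l' \<le> l" "r' \<le> r"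
    show "(l', r') \<in> \<Inter> G"
    proof (rule InterI)
      fix D assume D: "D \<in> G"
      then have Dt: "D \<in> tensor L R fl fr B" using G(1) by blast
      have "(l, r) \<in> D" using h(1) D by blast
      then show "(l', r') \<in> D" using tensorD_down[OF Dt] h by blast
    qed
  next
    fix T r assume h: "T \<subseteq> L" "r \<in> R" "\<And>t. t\<in>T \<Longrightarrow> (t, r) \<in> \<Inter> G"
    show "(c_lub L T, r) \<in> \<Inter> G"
    proof (rule InterI)
      fix D assume D: "D \<in> G"
      then have Dt: "D \<in> tensor L R fl fr B" using G(1) by blast
      have "\<And>t. t\<in>T \<Longrightarrow> (t, r) \<in> D" using h(3) D by blast
      then show "(c_lub L T, r) \<in> D" using tensorD_lub1[OF Dt] h(1,2) by blast
    qed
  next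
    fix l T assume h: "l \<in> L" "T \<subseteq> R" "\<And>t. t\<in>T \<Longrightarrow> (l, t) \<in> \<Inter> G"
    show "(l, c_lub R T) \<in> \<Inter> G"
    proof (rule InterI)
      fix D assume D: "D \<in> G"
      then have Dt: "D \<in> tensor L R fl fr B" using G(1) by blast
      have "\<And>t. t\<in>T \<Longrightarrow> (l, t) \<in> D" using h(3) D by blast
      then show "(l, c_lub R T) \<in> D" using tensorD_lub2[OF Dt] h(1,2) by blast
    qed
  next
    fix b l r assume h: "b \<in> B" "l \<in> L" "r \<in> R"
    have "(fl b l, r) \<in> D \<longleftrightarrow> (l, fr b r) \<in> D" if D: "D \<in> G" for D
    proof -
      have Dt: "D \<in> tensor L R fl fr B" using G(1) D by blast
      show ?thesis by (rule tensorD_sat[OF Dt h])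
    qed
    then show "((fl b l, r) \<in> \<Inter> G) = ((l, fr b r) \<in> \<Inter> G)" by blast
  qed
qed

lemma tensorU_moore: "moore (tensor UNIV UNIV fl fr B) UNIV"
  using tensor_moore[of UNIV UNIV B fl fr] by simp

lemma tensorU_mem:
  "D \<in> tensor UNIV UNIV fl fr B \<longleftrightarrow>
     (\<forall>l r l' r'. (l, r) \<in> D \<and> l' \<le> l \<and> r' \<le> r \<longrightarrow> (l', r') \<in> D) \<and>
     (\<forall>T r. (\<forall>t\<in>T. (t, r) \<in> D) \<longrightarrow> (Sup T, r) \<in> D) \<and>
     (\<forall>l T. (\<forall>t\<in>T. (l, t) \<in> D) \<longrightarrow> (l, Sup T) \<in> D) \<and>
     (\<forall>b\<in>B. \<forall>l r. (fl b l, r) \<in> D \<longleftrightarrow> (l, fr b r) \<in> D)"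
  unfolding tensor_def cideal_def by auto

lemma tensorUI:
  assumes "\<And>l r l' r'. (l, r) \<in> D \<Longrightarrow> l' \<le> l \<Longrightarrow> r' \<le> r \<Longrightarrow> (l', r') \<in> D"
    "\<And>T r. (\<And>t. t\<in>T \<Longrightarrow> (t, r) \<in> D) \<Longrightarrow> (Sup T, r) \<in> D"
    "\<And>l T. (\<And>t. t\<in>T \<Longrightarrow> (l, t) \<in> D) \<Longrightarrow> (l, Sup T) \<in> D"
    "\<And>b l r. b \<in> B \<Longrightarrow> (fl b l, r) \<in> D \<longleftrightarrow> (l, fr b r) \<in> D"
  shows "D \<in> tensor UNIV UNIV fl fr B"
proof (rule tensorI)
  show "D \<subseteq> UNIV \<times> UNIV" by simp
qed (use assms in auto)

lemma tensorU_down: "D \<in> tensor UNIV UNIV fl fr B \<Longrightarrow> (l, r) \<in> D \<Longrightarrow> l' \<le> l \<Longrightarrow> r' \<le> r \<Longrightarrow> (l', r') \<in> D"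
  using tensorD_down by blast

lemma tensorU_lub1: "D \<in> tensor UNIV UNIV fl fr B \<Longrightarrow> (\<And>t. t\<in>T \<Longrightarrow> (t, r) \<in> D) \<Longrightarrow> (Sup T, r) \<in> D"
  using tensorD_lub1[of D UNIV UNIV fl fr B T r] by simp

lemma tensorU_lub2: "D \<in> tensor UNIV UNIV fl fr B \<Longrightarrow> (\<And>t. t\<in>T \<Longrightarrow> (l, t) \<in> D) \<Longrightarrow> (l, Sup T) \<in> D"
  using tensorD_lub2[of D UNIV UNIV fl fr B l T] by simp

lemma tensorU_sat: "D \<in> tensor UNIV UNIV fl fr B \<Longrightarrow> b \<in> B \<Longrightarrow> (fl b l, r) \<in> D \<longleftrightarrow> (l, fr b r) \<in> D"
  using tensorD_sat[of D UNIV UNIV fl fr B b l r] by simp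

lemma tensorU_bot1: "D \<in> tensor UNIV UNIV fl fr B \<Longrightarrow> (bot, r) \<in> D"
  using tensorU_lub1[of D fl fr B "{}" r] by simp

lemma tensorU_pull:
  fixes fl :: "'b \<Rightarrow> 'l::complete_lattice \<Rightarrow> 'l" and fr :: "'b \<Rightarrow> 'r::complete_lattice \<Rightarrow> 'r"
  assumes dl: "\<And>(a::'l) T. inf a (Sup T) = Sup (inf a ` T)"
    and dr: "\<And>(a::'r) T. inf a (Sup T) = Sup (inf a ` T)"
    and cl: "\<And>b s p. b \<in> B \<Longrightarrow> fl b (inf s p) = inf (fl b s) p"
    and cr: "\<And>b s p. b \<in> B \<Longrightarrow> fr b (inf s p) = inf (fr b s) p"
    and S: "S \<in> tensor UNIV UNIV fl fr B"
  shows "{(r1, r2). \<forall>(q1, q2)\<in>C. (inf q1 r1, inf q2 r2) \<in> S} \<in> tensor UNIV UNIV fl fr B"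
proof (rule tensorUI)
  fix l r l' r' assume h: "(l, r) \<in> {(r1, r2). \<forall>(q1, q2)\<in>C. (inf q1 r1, inf q2 r2) \<in> S}" "l' \<le> l" "r' \<le> r"
  show "(l', r') \<in> {(r1, r2). \<forall>(q1, q2)\<in>C. (inf q1 r1, inf q2 r2) \<in> S}"
  proof (clarsimp)
    fix q1 q2 assume "(q1, q2) \<in> C"
    then have "(inf q1 l, inf q2 r) \<in> S" using h(1) by blast
    then show "(inf q1 l', inf q2 r') \<in> S"
      using tensorU_down[OF S _ inf_mono[OF order_refl h(2)] inf_mono[OF order_refl h(3)]] by blast
  qed
next
  fix T r assume h: "\<And>t. t \<in> T \<Longrightarrow> (t, r) \<in> {(r1, r2). \<forall>(q1, q2)\<in>C. (inf q1 r1, inf q2 r2) \<in> S}"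
  show "(Sup T, r) \<in> {(r1, r2). \<forall>(q1, q2)\<in>C. (inf q1 r1, inf q2 r2) \<in> S}"
  proof (clarsimp)
    fix q1 q2 assume q: "(q1, q2) \<in> C"
    have "(Sup (inf q1 ` T), inf q2 r) \<in> S"
      by (rule tensorU_lub1[OF S]) (use h q in auto)
    then show "(inf q1 (Sup T), inf q2 r) \<in> S" by (simp add: dl)
  qed
next
  fix l T assume h: "\<And>t. t \<in> T \<Longrightarrow> (l, t) \<in> {(r1, r2). \<forall>(q1, q2)\<in>C. (inf q1 r1, inf q2 r2) \<in> S}"
  show "(l, Sup T) \<in> {(r1, r2). \<forall>(q1, q2)\<in>C. (inf q1 r1, inf q2 r2) \<in> S}"
  proof (clarsimp)
    fix q1 q2 assume q: "(q1, q2) \<in> C"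
    have "(inf q1 l, Sup (inf q2 ` T)) \<in> S"
      by (rule tensorU_lub2[OF S]) (use h q in auto)
    then show "(inf q1 l, inf q2 (Sup T)) \<in> S" by (simp add: dr)
  qed
next
  fix b l r assume b: "b \<in> B"
  have e1: "inf q1 (fl b l) = fl b (inf l q1)" for q1 using cl[OF b, of l q1] inf_commute[of q1 "fl b l"] by simp
  have e2: "inf q2 (fr b r) = fr b (inf r q2)" for q2 using cr[OF b, of r q2] inf_commute[of q2 "fr b r"] by simp
  have "(inf q1 (fl b l), inf q2 r) \<in> S \<longleftrightarrow> (inf q1 l, inf q2 (fr b r)) \<in> S" for q1 q2
    unfolding e1 e2 using tensorU_sat[OF S b, of "inf l q1" "inf r q2"] by (simp add: inf_commute)
  then show "(fl b l, r) \<in> {(r1, r2). \<forall>(q1, q2)\<in>C. (inf q1 r1, inf q2 r2) \<in> S} \<longleftrightarrow>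
        (l, fr b r) \<in> {(r1, r2). \<forall>(q1, q2)\<in>C. (inf q1 r1, inf q2 r2) \<in> S}" by auto
qed

lemma tensorU_M:
  fixes fl :: "'b \<Rightarrow> 'l::complete_lattice \<Rightarrow> 'l" and fr :: "'b \<Rightarrow> 'r::complete_lattice \<Rightarrow> 'r"
  assumes dl: "\<And>(a::'l) T. inf a (Sup T) = Sup (inf a ` T)"
    and dr: "\<And>(a::'r) T. inf a (Sup T) = Sup (inf a ` T)"
    and cl: "\<And>b s p. b \<in> B \<Longrightarrow> fl b (inf s p) = inf (fl b s) p"
    and cr: "\<And>b s p. b \<in> B \<Longrightarrow> fr b (inf s p) = inf (fr b s) p"
    and E: "E \<in> tensor UNIV UNIV fl fr B"
    and h: "\<And>p1 p2. (p1, p2) \<in> D \<Longrightarrow> (inf p1 l, inf p2 r) \<in> E"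
  shows "D \<inter> tel (tensor UNIV UNIV fl fr B) l r \<subseteq> E"
proof
  let ?K = "{(r1, r2). \<forall>(q1, q2)\<in>D. (inf q1 r1, inf q2 r2) \<in> E}"
  have K: "?K \<in> tensor UNIV UNIV fl fr B" by (rule tensorU_pull[OF dl dr cl cr E])
  have "(l, r) \<in> ?K" using h by auto
  then have tK: "tel (tensor UNIV UNIV fl fr B) l r \<subseteq> ?K" by (rule moore_tel_least[OF tensorU_moore K])
  fix x assume x: "x \<in> D \<inter> tel (tensor UNIV UNIV fl fr B) l r"
  obtain s1 s2 where xs: "x = (s1, s2)" by fastforce
  have "(s1, s2) \<in> ?K" using x tK xs by blast
  moreover have "(s1, s2) \<in> D" using x xs by blast
  ultimately have "(inf s1 s1, inf s2 s2) \<in> E" by blast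
  then show "x \<in> E" using xs by simp
qed

lemma tensorU_tel_in: "(l, r) \<in> tel (tensor UNIV UNIV fl fr B) l r"
  using moore_tel_in[OF tensorU_moore] by simp

lemma tensorU_tel_mem: "tel (tensor UNIV UNIV fl fr B) l r \<in> tensor UNIV UNIV fl fr B"
  using moore_tel_mem[OF tensorU_moore] .

lemma sup_mono_gen: "(\<And>S. f (Sup S) = Sup (f ` S)) \<Longrightarrow> (a::'a::complete_lattice) \<le> b \<Longrightarrow> (f a::'b::complete_lattice) \<le> f b"
proof -
  assume h: "\<And>S. f (Sup S) = Sup (f ` S)" and ab: "a \<le> b"
  have "Sup {a, b} = b" using ab by (simp add: sup_absorb2)
  then have "f b = Sup {f a, f b}" using h[of "{a,b}"] by simp
  then show ?thesis by (metis Sup_insert sup.cobounded1)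
qed

locale GQ =
  fixes mul :: "'q::complete_lattice \<Rightarrow> 'q \<Rightarrow> 'q"
    and invo :: "'q \<Rightarrow> 'q"
    and lact :: "'a::complete_lattice \<Rightarrow> 'q \<Rightarrow> 'q"
    and ract :: "'q \<Rightarrow> 'a \<Rightarrow> 'q"
    and sigQ :: "'q \<Rightarrow> 'a"
    and ups :: "'q \<Rightarrow> 'a"
    and qact :: "'q \<Rightarrow> 'x::complete_lattice \<Rightarrow> 'x"
    and xact :: "'a \<Rightarrow> 'x \<Rightarrow> 'x"
    and ip :: "'x \<Rightarrow> 'x \<Rightarrow> 'q"
    and sigX :: "'x \<Rightarrow> 'a"
    and piS :: "'m::complete_lattice \<Rightarrow> 'x"
    and sigt :: "'x \<Rightarrow> 'm"
  assumes gq: "groupoid_quantale mul invo lact ract sigQ ups"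
    and pq: "principal_Q_locale mul invo lact ract sigQ ups qact xact ip sigX piS sigt"
begin

lemmas gq_facts_all = gq[unfolded groupoid_quantale_def]
lemmas A_frame = gq_facts_all[THEN conjunct1]
lemmas iq = gq_facts_all[THEN conjunct2, THEN conjunct1]
lemmas lm = gq_facts_all[THEN conjunct2, THEN conjunct2, THEN conjunct1]
lemmas rm = gq_facts_all[THEN conjunct2, THEN conjunct2, THEN conjunct2, THEN conjunct1]
lemmas lr_comm = gq_facts_all[THEN conjunct2, THEN conjunct2, THEN conjunct2, THEN conjunct2, THEN conjunct1, rule_format]
lemmas mul_lact = gq_facts_all[THEN conjunct2, THEN conjunct2, THEN conjunct2, THEN conjunct2, THEN conjunct2, THEN conjunct1, rule_format]
lemmas mul_ract = gq_facts_all[THEN conjunct2, THEN conjunct2, THEN conjunct2, THEN conjunct2, THEN conjunct2, THEN conjunct2, THEN conjunct1, rule_format]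
lemmas ract_mul = gq_facts_all[THEN conjunct2, THEN conjunct2, THEN conjunct2, THEN conjunct2, THEN conjunct2, THEN conjunct2, THEN conjunct2, THEN conjunct1, rule_format]
lemmas invo_lr = gq_facts_all[THEN conjunct2, THEN conjunct2, THEN conjunct2, THEN conjunct2, THEN conjunct2, THEN conjunct2, THEN conjunct2, THEN conjunct2, THEN conjunct1, rule_format]
lemmas Q_frame = gq_facts_all[THEN conjunct2, THEN conjunct2, THEN conjunct2, THEN conjunct2, THEN conjunct2, THEN conjunct2, THEN conjunct2, THEN conjunct2, THEN conjunct2, THEN conjunct1]
lemmas inf_lact = gq_facts_all[THEN conjunct2, THEN conjunct2, THEN conjunct2, THEN conjunct2, THEN conjunct2, THEN conjunct2, THEN conjunct2, THEN conjunct2, THEN conjunct2, THEN conjunct2, THEN conjunct1, rule_format]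
lemmas inf_ract = gq_facts_all[THEN conjunct2, THEN conjunct2, THEN conjunct2, THEN conjunct2, THEN conjunct2, THEN conjunct2, THEN conjunct2, THEN conjunct2, THEN conjunct2, THEN conjunct2, THEN conjunct2, THEN conjunct1, rule_format]
lemmas sigQ_sp = gq_facts_all[THEN conjunct2, THEN conjunct2, THEN conjunct2, THEN conjunct2, THEN conjunct2, THEN conjunct2, THEN conjunct2, THEN conjunct2, THEN conjunct2, THEN conjunct2, THEN conjunct2, THEN conjunct2, THEN conjunct1]
lemmas sigQ_top = gq_facts_all[THEN conjunct2, THEN conjunct2, THEN conjunct2, THEN conjunct2, THEN conjunct2, THEN conjunct2, THEN conjunct2, THEN conjunct2, THEN conjunct2, THEN conjunct2, THEN conjunct2, THEN conjunct2, THEN conjunct2, THEN conjunct1]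
lemmas sigQ_le = gq_facts_all[THEN conjunct2, THEN conjunct2, THEN conjunct2, THEN conjunct2, THEN conjunct2, THEN conjunct2, THEN conjunct2, THEN conjunct2, THEN conjunct2, THEN conjunct2, THEN conjunct2, THEN conjunct2, THEN conjunct2, THEN conjunct2, THEN conjunct1, rule_format]
lemmas sigQ_fix = gq_facts_all[THEN conjunct2, THEN conjunct2, THEN conjunct2, THEN conjunct2, THEN conjunct2, THEN conjunct2, THEN conjunct2, THEN conjunct2, THEN conjunct2, THEN conjunct2, THEN conjunct2, THEN conjunct2, THEN conjunct2, THEN conjunct2, THEN conjunct2, THEN conjunct1, rule_format]
lemmas sigQ_lact = gq_facts_all[THEN conjunct2, THEN conjunct2, THEN conjunct2, THEN conjunct2, THEN conjunct2, THEN conjunct2, THEN conjunct2, THEN conjunct2, THEN conjunct2, THEN conjunct2, THEN conjunct2, THEN conjunct2, THEN conjunct2, THEN conjunct2, THEN conjunct2, THEN conjunct2, THEN conjunct1, rule_format]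
lemmas ups_hom = gq_facts_all[THEN conjunct2, THEN conjunct2, THEN conjunct2, THEN conjunct2, THEN conjunct2, THEN conjunct2, THEN conjunct2, THEN conjunct2, THEN conjunct2, THEN conjunct2, THEN conjunct2, THEN conjunct2, THEN conjunct2, THEN conjunct2, THEN conjunct2, THEN conjunct2, THEN conjunct2, THEN conjunct1]
lemmas ups_dr = gq_facts_all[THEN conjunct2, THEN conjunct2, THEN conjunct2, THEN conjunct2, THEN conjunct2, THEN conjunct2, THEN conjunct2, THEN conjunct2, THEN conjunct2, THEN conjunct2, THEN conjunct2, THEN conjunct2, THEN conjunct2, THEN conjunct2, THEN conjunct2, THEN conjunct2, THEN conjunct2, THEN conjunct2, THEN conjunct1, rule_format]
lemmas radj_hom = gq_facts_all[THEN conjunct2, THEN conjunct2, THEN conjunct2, THEN conjunct2, THEN conjunct2, THEN conjunct2, THEN conjunct2, THEN conjunct2, THEN conjunct2, THEN conjunct2, THEN conjunct2, THEN conjunct2, THEN conjunct2, THEN conjunct2, THEN conjunct2, THEN conjunct2, THEN conjunct2, THEN conjunct2, THEN conjunct2, THEN conjunct1]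
lemmas ups_sup = gq_facts_all[THEN conjunct2, THEN conjunct2, THEN conjunct2, THEN conjunct2, THEN conjunct2, THEN conjunct2, THEN conjunct2, THEN conjunct2, THEN conjunct2, THEN conjunct2, THEN conjunct2, THEN conjunct2, THEN conjunct2, THEN conjunct2, THEN conjunct2, THEN conjunct2, THEN conjunct2, THEN conjunct2, THEN conjunct2, THEN conjunct2, THEN conjunct1, rule_format]
lemmas ups_top = gq_facts_all[THEN conjunct2, THEN conjunct2, THEN conjunct2, THEN conjunct2, THEN conjunct2, THEN conjunct2, THEN conjunct2, THEN conjunct2, THEN conjunct2, THEN conjunct2, THEN conjunct2, THEN conjunct2, THEN conjunct2, THEN conjunct2, THEN conjunct2, THEN conjunct2, THEN conjunct2, THEN conjunct2, THEN conjunct2, THEN conjunct2, THEN conjunct2, rule_format]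

lemmas iq_facts_all = iq[unfolded involutive_quantale_def sup_preserving_def]
lemmas mul_assoc = iq_facts_all[THEN conjunct1, rule_format]
lemmas mul_Sup2 = iq_facts_all[THEN conjunct2, THEN conjunct1, rule_format]
lemmas mul_Sup1 = iq_facts_all[THEN conjunct2, THEN conjunct2, THEN conjunct1, rule_format]
lemmas invo_invo = iq_facts_all[THEN conjunct2, THEN conjunct2, THEN conjunct2, THEN conjunct1, rule_format]
lemmas invo_mul = iq_facts_all[THEN conjunct2, THEN conjunct2, THEN conjunct2, THEN conjunct2, THEN conjunct1, rule_format]
lemmas invo_Sup = iq_facts_all[THEN conjunct2, THEN conjunct2, THEN conjunct2, THEN conjunct2, THEN conjunct2, rule_format]

lemmas lm_facts_all = lm[unfolded left_A_module_def]
lemmas lact_Sup2 = lm_facts_all[THEN conjunct1, rule_format]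
lemmas lact_Sup1 = lm_facts_all[THEN conjunct2, THEN conjunct1, rule_format]
lemmas lact_inf = lm_facts_all[THEN conjunct2, THEN conjunct2, rule_format]

lemmas rm_facts_all = rm[unfolded right_A_module_def]
lemmas ract_Sup1 = rm_facts_all[THEN conjunct1, rule_format]
lemmas ract_Sup2 = rm_facts_all[THEN conjunct2, THEN conjunct1, rule_format]
lemmas ract_inf = rm_facts_all[THEN conjunct2, THEN conjunct2, rule_format]

lemmas pq_facts_all = pq[unfolded principal_Q_locale_def]
lemmas Qloc = pq_facts_all[THEN conjunct1]
lemmas M_frame = pq_facts_all[THEN conjunct2, THEN conjunct1]
lemmas od = pq_facts_all[THEN conjunct2, THEN conjunct2, THEN conjunct1]
lemmas sigt_top = pq_facts_all[THEN conjunct2, THEN conjunct2, THEN conjunct2, THEN conjunct1]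
lemmas P2 = pq_facts_all[THEN conjunct2, THEN conjunct2, THEN conjunct2, THEN conjunct2, THEN conjunct1, rule_format]
lemmas P3 = pq_facts_all[THEN conjunct2, THEN conjunct2, THEN conjunct2, THEN conjunct2, THEN conjunct2]

lemmas ql_facts_all = Qloc[unfolded Q_locale_def]
lemmas ss_all = ql_facts_all[THEN conjunct1, unfolded stably_supported_def]
lemmas alpha_sup = ql_facts_all[THEN conjunct2, THEN conjunct1]
lemmas ups_X = ql_facts_all[THEN conjunct2, THEN conjunct2, rule_format]
lemmas pH = ss_all[THEN conjunct1]
lemmas sigX_mono = ss_all[THEN conjunct2, THEN conjunct1]
lemmas sigX_top = ss_all[THEN conjunct2, THEN conjunct2, THEN conjunct1]
lemmas sigX_le = ss_all[THEN conjunct2, THEN conjunct2, THEN conjunct2, THEN conjunct1, rule_format]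
lemmas sigX_fix = ss_all[THEN conjunct2, THEN conjunct2, THEN conjunct2, THEN conjunct2, THEN conjunct1, rule_format]
lemmas sigX_qact = ss_all[THEN conjunct2, THEN conjunct2, THEN conjunct2, THEN conjunct2, THEN conjunct2, rule_format]

lemmas ph_facts_all = pH[unfolded pre_Hilbert_def]
lemmas Qmod = ph_facts_all[THEN conjunct1]
lemmas ip_qact = ph_facts_all[THEN conjunct2, THEN conjunct1, rule_format]
lemmas ip_lact = ph_facts_all[THEN conjunct2, THEN conjunct2, THEN conjunct1, rule_format]
lemmas ip_Sup = ph_facts_all[THEN conjunct2, THEN conjunct2, THEN conjunct2, THEN conjunct1, rule_format]
lemmas ip_sym = ph_facts_all[THEN conjunct2, THEN conjunct2, THEN conjunct2, THEN conjunct2, rule_format]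

lemmas qm_facts_all = Qmod[unfolded Q_module_def]
lemmas X_frame = qm_facts_all[THEN conjunct1]
lemmas qact_Sup2 = qm_facts_all[THEN conjunct2, THEN conjunct1, rule_format]
lemmas qact_Sup1 = qm_facts_all[THEN conjunct2, THEN conjunct2, THEN conjunct1, rule_format]
lemmas qact_mul = qm_facts_all[THEN conjunct2, THEN conjunct2, THEN conjunct2, THEN conjunct1, rule_format]
lemmas xlm = qm_facts_all[THEN conjunct2, THEN conjunct2, THEN conjunct2, THEN conjunct2, THEN conjunct1]
lemmas xact_top = qm_facts_all[THEN conjunct2, THEN conjunct2, THEN conjunct2, THEN conjunct2, THEN conjunct2, THEN conjunct1, rule_format]
lemmas qact_lact = qm_facts_all[THEN conjunct2, THEN conjunct2, THEN conjunct2, THEN conjunct2, THEN conjunct2, THEN conjunct2, THEN conjunct1, rule_format]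
lemmas qact_ract = qm_facts_all[THEN conjunct2, THEN conjunct2, THEN conjunct2, THEN conjunct2, THEN conjunct2, THEN conjunct2, THEN conjunct2, THEN conjunct1, rule_format]
lemmas xact_inf = qm_facts_all[THEN conjunct2, THEN conjunct2, THEN conjunct2, THEN conjunct2, THEN conjunct2, THEN conjunct2, THEN conjunct2, THEN conjunct2, rule_format]

lemmas xlm_facts_all = xlm[unfolded left_A_module_def]
lemmas xact_Sup2 = xlm_facts_all[THEN conjunct1, rule_format]
lemmas xact_Sup1 = xlm_facts_all[THEN conjunct2, THEN conjunct1, rule_format]
lemmas xact_inf2 = xlm_facts_all[THEN conjunct2, THEN conjunct2, rule_format]

lemmas od_facts_all = od[unfolded open_dimage_def]
lemmas piS_hom = od_facts_all[THEN conjunct1]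
lemmas sigt_adj = od_facts_all[THEN conjunct2, THEN conjunct2, THEN conjunct1, rule_format, simplified]
lemmas sigt_frob = od_facts_all[THEN conjunct2, THEN conjunct2, THEN conjunct2, rule_format, simplified]

lemma mul_mono: "x \<le> x' \<Longrightarrow> y \<le> y' \<Longrightarrow> mul x y \<le> mul x' y'"
proof -
  assume a: "x \<le> x'" "y \<le> y'"
  have "mul x y \<le> mul x y'" using sup_mono_gen[of "mul x", OF mul_Sup2 a(2)] .
  also have "\<dots> \<le> mul x' y'" using sup_mono_gen[of "\<lambda>x. mul x y'", OF mul_Sup1 a(1)] .
  finally show ?thesis .
qed

lemma lact_mono: "a \<le> a' \<Longrightarrow> y \<le> y' \<Longrightarrow> lact a y \<le> lact a' y'"
proof -
  assume h: "a \<le> a'" "y \<le> y'"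
  have "lact a y \<le> lact a y'" using sup_mono_gen[of "lact a", OF lact_Sup2 h(2)] .
  also have "\<dots> \<le> lact a' y'" using sup_mono_gen[of "\<lambda>a. lact a y'", OF lact_Sup1 h(1)] .
  finally show ?thesis .
qed

lemma ract_mono: "x \<le> x' \<Longrightarrow> a \<le> a' \<Longrightarrow> ract x a \<le> ract x' a'"
proof -
  assume h: "x \<le> x'" "a \<le> a'"
  have "ract x a \<le> ract x a'" using sup_mono_gen[of "ract x", OF ract_Sup2 h(2)] .
  also have "\<dots> \<le> ract x' a'" using sup_mono_gen[of "\<lambda>x. ract x a'", OF ract_Sup1 h(1)] .
  finally show ?thesis .
qed

lemma qact_mono: "q \<le> q' \<Longrightarrow> y \<le> y' \<Longrightarrow> qact q y \<le> qact q' y'"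
proof -
  assume h: "q \<le> q'" "y \<le> y'"
  have "qact q y \<le> qact q y'" using sup_mono_gen[of "qact q", OF qact_Sup2 h(2)] .
  also have "\<dots> \<le> qact q' y'" using sup_mono_gen[of "\<lambda>q. qact q y'", OF qact_Sup1 h(1)] .
  finally show ?thesis .
qed

lemma xact_mono: "a \<le> a' \<Longrightarrow> y \<le> y' \<Longrightarrow> xact a y \<le> xact a' y'"
proof -
  assume h: "a \<le> a'" "y \<le> y'"
  have "xact a y \<le> xact a y'" using sup_mono_gen[of "xact a", OF xact_Sup2 h(2)] .
  also have "\<dots> \<le> xact a' y'" using sup_mono_gen[of "\<lambda>a. xact a y'", OF xact_Sup1 h(1)] .
  finally show ?thesis .
qed

lemma invo_mono: "x \<le> y \<Longrightarrow> invo x \<le> invo y"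
  using sup_mono_gen[of invo, OF invo_Sup] .

lemma sigQ_mono: "x \<le> y \<Longrightarrow> sigQ x \<le> sigQ y"
  using sup_mono_gen[of sigQ] sigQ_sp unfolding sup_preserving_def by blast

lemma ip_mono1: "x \<le> x' \<Longrightarrow> ip x y \<le> ip x' y"
  using sup_mono_gen[of "\<lambda>x. ip x y", OF ip_Sup] .

lemma ip_mono2: "y \<le> y' \<Longrightarrow> ip x y \<le> ip x y'"
  by (metis ip_sym ip_mono1 invo_mono)

lemma ip_mono: "x \<le> x' \<Longrightarrow> y \<le> y' \<Longrightarrow> ip x y \<le> ip x' y'"
  by (meson ip_mono1 ip_mono2 order_trans)

lemma invo_top: "invo top = top"
proof -
  have "y \<le> invo top" for y
  proof -
    have "invo (invo y) \<le> invo top" by (rule invo_mono) simp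
    then show ?thesis by (simp add: invo_invo)
  qed
  then show ?thesis by (simp add: top_le)
qed

lemma lact_le: "lact a x \<le> x"
  by (metis inf_lact inf_idem inf.cobounded2)

lemma ract_le: "ract x a \<le> x"
  by (metis inf_ract inf_idem inf.cobounded1)

lemma lact_top: "lact top x = x"
proof (rule antisym)
  show "lact top x \<le> x" by (rule lact_le)
  have "x = lact (sigQ x) x" by (simp add: sigQ_fix)
  also have "\<dots> \<le> lact top x" by (rule lact_mono) auto
  finally show "x \<le> lact top x" .
qed

lemma ract_top_top: "ract top top = top"
proof -
  let ?c = "ract top top"
  have u: "ups ?c = top" using ups_dr by simp
  have "top = lact (ups ?c) top" using lact_top u by simp
  also have "\<dots> = Sup {x. mul x (invo x) \<le> ?c}" by (rule ups_top[of ?c])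
  finally have t: "top = Sup {x. mul x (invo x) \<le> ?c}" .
  have key: "invo x \<le> ?c" if hx: "mul x (invo x) \<le> ?c" for x
  proof -
    let ?y = "invo x"
    have yy: "mul (invo ?y) ?y \<le> ?c" using hx by (simp add: invo_invo)
    have "?y = lact (sigQ ?y) ?y" by (simp add: sigQ_fix)
    also have "\<dots> \<le> mul (mul ?y (invo ?y)) ?y" by (rule sigQ_le)
    also have "\<dots> = mul ?y (mul (invo ?y) ?y)" by (rule mul_assoc)
    also have "\<dots> \<le> mul ?y ?c" by (rule mul_mono[OF order_refl yy])
    also have "\<dots> = ract (mul ?y top) top" by (simp add: ract_mul)
    also have "\<dots> \<le> ?c" by (rule ract_mono) auto
    finally show ?thesis .
  qed
  have "top = invo top" by (simp add: invo_top)
  also have "\<dots> = Sup (invo ` {x. mul x (invo x) \<le> ?c})" using t invo_Sup by metis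
  also have "\<dots> \<le> ?c" using key by (auto intro: Sup_least)
  finally show ?thesis by (simp add: top_le)
qed

lemma ract_top: "ract x top = x"
  by (metis inf_ract inf_top_left inf_top_right ract_top_top)

lemma ract_invo: "ract z a = invo (lact a (invo z))"
proof -
  have "invo (lact a (ract (invo z) top)) = lact top (ract (invo (invo z)) a)" by (rule invo_lr)
  then show ?thesis by (simp add: ract_top lact_top invo_invo)
qed

lemma ract_sig: "ract q (sigQ (invo q)) = q"
  by (simp add: ract_invo sigQ_fix invo_invo)

lemma ract_sigQ_le: "ract z (sigQ w) \<le> mul z (mul w (invo w))"
proof -
  have "ract z (sigQ w) = invo (lact (sigQ w) (invo z))" by (rule ract_invo)
  also have "\<dots> \<le> invo (mul (mul w (invo w)) (invo z))" by (rule invo_mono[OF sigQ_le])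
  also have "\<dots> = mul z (mul w (invo w))" by (simp add: invo_mul invo_invo mul_assoc)
  finally show ?thesis .
qed

lemma xact_le: "xact a x \<le> x"
  by (metis xact_inf inf_top_left inf.cobounded2)

lemma xact_eq_inf: "xact a x = inf (xact a top) x"
  by (metis xact_inf inf_top_left)

lemma Q_distrib: "inf (a::'q) (Sup T) = Sup (inf a ` T)" by (rule frame_distrib[OF Q_frame])
lemma X_distrib: "inf (a::'x) (Sup T) = Sup (inf a ` T)" by (rule frame_distrib[OF X_frame])

lemma sigX_ip: "sigX x = sigQ (ip x top)"
proof (rule antisym)
  have "x = xact (sigX x) x" by (simp add: sigX_fix)
  also have "\<dots> \<le> xact (sigX x) top" by (rule xact_mono) auto
  also have "\<dots> \<le> qact (ip x x) top" by (rule sigX_le)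
  finally have "sigX x \<le> sigX (qact (ip x x) top)" using sigX_mono by (simp add: monoD)
  also have "\<dots> \<le> sigQ (ip x x)" by (rule sigX_qact)
  also have "\<dots> \<le> sigQ (ip x top)" by (rule sigQ_mono[OF ip_mono2]) simp
  finally show "sigX x \<le> sigQ (ip x top)" .
  have "lact (sigX x) (ip x top) = ip x top" by (simp add: ip_lact sigX_fix)
  then have "sigQ (ip x top) = inf (sigX x) (sigQ (ip x top))" by (metis sigQ_lact)
  then show "sigQ (ip x top) \<le> sigX x" by (metis inf.cobounded1)
qed

lemma sigX_xact: "sigX (xact a x) = inf a (sigX x)"
  by (simp add: sigX_ip ip_lact[symmetric] sigQ_lact)

end

context GQ begin

abbreviation "QQ \<equiv> QQ_tensor lact ract"
abbreviation "QX \<equiv> QX_tensor ract xact"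

lemma QQ_eq: "QQ = tensor UNIV UNIV (\<lambda>a x. ract x a) lact UNIV"
  by (simp add: QQ_tensor_def)
lemma QX_eq: "QX = tensor UNIV UNIV (\<lambda>a q. ract q a) xact UNIV"
  by (simp add: QX_tensor_def)

lemma QQ_moore: "moore QQ UNIV" unfolding QQ_eq by (rule tensorU_moore)
lemma QX_moore: "moore QX UNIV" unfolding QX_eq by (rule tensorU_moore)

lemma cl_ract: "ract (inf s p) b = inf (ract s b) p"
  by (metis inf_ract inf_commute)
lemma cr_lact: "lact b (inf s p) = inf (lact b s) p"
  by (metis inf_lact)
lemma cr_xact: "xact b (inf s p) = inf (xact b s) p"
  by (metis xact_inf)

lemma QQ_M:
  assumes "E \<in> QQ" "\<And>p1 p2. (p1, p2) \<in> D \<Longrightarrow> (inf p1 l, inf p2 r) \<in> E"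
  shows "D \<inter> tel QQ l r \<subseteq> E"
  using tensorU_M[where fl="\<lambda>a x. ract x a" and B=UNIV and fr=lact and E=E and D=D and l=l and r=r] assms Q_distrib cl_ract cr_lact
  unfolding QQ_eq by blast

lemma QX_M:
  assumes "E \<in> QX" "\<And>p1 p2. (p1, p2) \<in> D \<Longrightarrow> (inf p1 l, inf p2 r) \<in> E"
  shows "D \<inter> tel QX l r \<subseteq> E"
  using tensorU_M[where fl="\<lambda>a q. ract q a" and B=UNIV and fr=xact and E=E and D=D and l=l and r=r] assms Q_distrib X_distrib cl_ract cr_xact
  unfolding QX_eq by blast

lemma QQ_pull: "S \<in> QQ \<Longrightarrow> {(r1, r2). \<forall>(q1, q2)\<in>C. (inf q1 r1, inf q2 r2) \<in> S} \<in> QQ"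
  using tensorU_pull[where fl="\<lambda>a x. ract x a" and B=UNIV and fr=lact and S=S and C=C] Q_distrib cl_ract cr_lact
  unfolding QQ_eq by blast

lemma QQ_down: "D \<in> QQ \<Longrightarrow> (l, r) \<in> D \<Longrightarrow> l' \<le> l \<Longrightarrow> r' \<le> r \<Longrightarrow> (l', r') \<in> D"
  unfolding QQ_eq by (rule tensorU_down)
lemma QX_down: "D \<in> QX \<Longrightarrow> (l, r) \<in> D \<Longrightarrow> l' \<le> l \<Longrightarrow> r' \<le> r \<Longrightarrow> (l', r') \<in> D"
  unfolding QX_eq by (rule tensorU_down)
lemma QQ_sat: "D \<in> QQ \<Longrightarrow> (ract l b, r) \<in> D \<longleftrightarrow> (l, lact b r) \<in> D"
  unfolding QQ_eq using tensorU_sat[of D "\<lambda>a x. ract x a" lact UNIV b l r] by simp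
lemma QX_sat: "D \<in> QX \<Longrightarrow> (ract l b, r) \<in> D \<longleftrightarrow> (l, xact b r) \<in> D"
  unfolding QX_eq using tensorU_sat[of D "\<lambda>a q. ract q a" xact UNIV b l r] by simp
lemma QQ_tel_in: "(l, r) \<in> tel QQ l r" unfolding QQ_eq by (rule tensorU_tel_in)
lemma QX_tel_in: "(l, r) \<in> tel QX l r" unfolding QX_eq by (rule tensorU_tel_in)
lemma QQ_tel_mem: "tel QQ l r \<in> QQ" unfolding QQ_eq by (rule tensorU_tel_mem)
lemma QX_tel_mem: "tel QX l r \<in> QX" unfolding QX_eq by (rule tensorU_tel_mem)
lemma QQ_tel_least: "D \<in> QQ \<Longrightarrow> (l, r) \<in> D \<Longrightarrow> tel QQ l r \<subseteq> D"
  by (rule moore_tel_least[OF QQ_moore])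
lemma QX_tel_least: "D \<in> QX \<Longrightarrow> (l, r) \<in> D \<Longrightarrow> tel QX l r \<subseteq> D"
  by (rule moore_tel_least[OF QX_moore])

definition Ax :: "'x \<Rightarrow> ('q \<times> 'x) set" where "Ax x = {(q, y). qact q y \<le> x}"

lemma Ax_mem: "Ax x \<in> QX"
  unfolding QX_eq Ax_def
proof (rule tensorUI)
  fix l r l' r' assume "(l, r) \<in> {(q, y). qact q y \<le> x}" "l' \<le> l" "r' \<le> r"
  then show "(l', r') \<in> {(q, y). qact q y \<le> x}" using qact_mono by (blast intro: order_trans)
next
  fix T r assume "\<And>t. t \<in> T \<Longrightarrow> (t, r) \<in> {(q, y). qact q y \<le> x}"
  then show "(Sup T, r) \<in> {(q, y). qact q y \<le> x}" by (simp add: qact_Sup1 SUP_le_iff)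
next
  fix l T assume "\<And>t. t \<in> T \<Longrightarrow> (l, t) \<in> {(q, y). qact q y \<le> x}"
  then show "(l, Sup T) \<in> {(q, y). qact q y \<le> x}" by (simp add: qact_Sup2 SUP_le_iff)
next
  fix b l r
  show "(ract l b, r) \<in> {(q, y). qact q y \<le> x} \<longleftrightarrow> (l, xact b r) \<in> {(q, y). qact q y \<le> x}"
    by (simp add: qact_ract)
qed

lemma alpha_eq: "alpha_star ract xact qact x = Ax x"
proof -
  let ?S = "{tel QX q y | q y. qact q y \<le> x}"
  have "alpha_star ract xact qact x = c_lub QX ?S" by (simp add: alpha_star_def)
  also have "\<dots> = Ax x"
  proof (rule antisym)
    show "c_lub QX ?S \<subseteq> Ax x"
    proof (rule moore_lub_least[OF QX_moore _ Ax_mem])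
      fix s assume "s \<in> ?S"
      then obtain q y where "s = tel QX q y" "qact q y \<le> x" by blast
      then show "s \<subseteq> Ax x" using QX_tel_least[OF Ax_mem] by (simp add: Ax_def)
    qed simp
    show "Ax x \<subseteq> c_lub QX ?S"
    proof
      fix p assume "p \<in> Ax x"
      then obtain q y where p: "p = (q, y)" "qact q y \<le> x" by (auto simp: Ax_def)
      then have "tel QX q y \<in> ?S" by blast
      then have "tel QX q y \<subseteq> c_lub QX ?S" by (rule moore_lub_upper[OF QX_moore, rotated]) simp
      then show "p \<in> c_lub QX ?S" using QX_tel_in p by blast
    qed
  qed
  finally show ?thesis .
qed

definition Mq :: "'q \<Rightarrow> ('q \<times> 'q) set" where "Mq q = {(x, y). mul x y \<le> q}"

lemma Mq_mem: "Mq q \<in> QQ"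
  unfolding QQ_eq Mq_def
proof (rule tensorUI)
  fix l r l' r' assume "(l, r) \<in> {(x, y). mul x y \<le> q}" "l' \<le> l" "r' \<le> r"
  then show "(l', r') \<in> {(x, y). mul x y \<le> q}" using mul_mono by (blast intro: order_trans)
next
  fix T r assume "\<And>t. t \<in> T \<Longrightarrow> (t, r) \<in> {(x, y). mul x y \<le> q}"
  then show "(Sup T, r) \<in> {(x, y). mul x y \<le> q}" by (simp add: mul_Sup1 SUP_le_iff)
next
  fix l T assume "\<And>t. t \<in> T \<Longrightarrow> (l, t) \<in> {(x, y). mul x y \<le> q}"
  then show "(l, Sup T) \<in> {(x, y). mul x y \<le> q}" by (simp add: mul_Sup2 SUP_le_iff)
next
  fix b l r
  show "(ract l b, r) \<in> {(x, y). mul x y \<le> q} \<longleftrightarrow> (l, lact b r) \<in> {(x, y). mul x y \<le> q}"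
    by (simp add: mul_ract)
qed

lemma radj_eq: "mult_radj mul lact ract q = Mq q"
proof -
  let ?S = "{D \<in> QQ. mult_map mul D \<le> q}"
  have mm: "mult_map mul (Mq q) \<le> q" unfolding mult_map_def Mq_def by (auto intro: Sup_least)
  have "c_lub QQ ?S = Mq q"
  proof (rule antisym)
    show "c_lub QQ ?S \<subseteq> Mq q"
    proof (rule moore_lub_least[OF QQ_moore _ Mq_mem])
      fix s assume s: "s \<in> ?S"
      show "s \<subseteq> Mq q"
      proof
        fix p assume p: "p \<in> s"
        obtain x y where xy: "p = (x, y)" by fastforce
        have "mul x y \<le> mult_map mul s" unfolding mult_map_def using p xy by (blast intro: Sup_upper)
        also have "\<dots> \<le> q" using s by simp
        finally show "p \<in> Mq q" using xy by (simp add: Mq_def)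
      qed
    qed simp
    show "Mq q \<subseteq> c_lub QQ ?S"
      by (rule moore_lub_upper[OF QQ_moore]) (use mm Mq_mem in auto)
  qed
  then show ?thesis by (simp add: mult_radj_def)
qed

lemma G1X_eq: "G1X_frame (\<lambda>a. ract top a) (\<lambda>a. xact a top) = QX"
proof -
  have "(\<lambda>b l. c_meet UNIV (ract top b) l) = (\<lambda>a q. ract q a)"
    by (intro ext) (simp add: inf_commute inf_ract)
  moreover have "(\<lambda>b r. c_meet UNIV (xact b top) r) = xact"
    by (intro ext) (simp add: xact_eq_inf[symmetric])
  ultimately show ?thesis by (simp add: G1X_frame_def pushout_def QX_eq)
qed

lemma G2_eq: "G2_frame (\<lambda>a. lact a top) (\<lambda>a. ract top a) = QQ"
proof -
  have "(\<lambda>b l. c_meet UNIV (ract top b) l) = (\<lambda>a q. ract q a)"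
    by (intro ext) (simp add: inf_commute inf_ract)
  moreover have "(\<lambda>b r. c_meet UNIV (lact b top) r) = lact"
    by (intro ext) (simp add: inf_lact)
  ultimately show ?thesis by (simp add: G2_frame_def pushout_def QQ_eq)
qed

end

context GQ begin

lemma pS_hom: "frame_hom UNIV UNIV (\<lambda>a. xact a top)"
  unfolding frame_hom_def
proof (intro conjI ballI allI impI)
  show "xact (c_top UNIV) top = c_top UNIV" by (simp add: xact_top)
  fix T :: "'a set" show "xact (c_lub UNIV T) top = c_lub UNIV ((\<lambda>a. xact a top) ` T)"
    by (simp add: xact_Sup1)
next
  fix x y :: 'a
  show "xact (c_meet UNIV x y) top = c_meet UNIV (xact x top) (xact y top)"
    by (simp add: xact_inf2) (metis xact_eq_inf)
qed simp

lemma sigX_adj: "sigX x \<le> a \<longleftrightarrow> x \<le> xact a top"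
proof
  assume "sigX x \<le> a"
  have "x = xact (sigX x) x" by (simp add: sigX_fix)
  also have "\<dots> \<le> xact a top" using \<open>sigX x \<le> a\<close> by (rule xact_mono) simp
  finally show "x \<le> xact a top" .
next
  assume "x \<le> xact a top"
  then have "sigX x \<le> sigX (xact a top)" using sigX_mono by (simp add: monoD)
  also have "\<dots> \<le> a" by (simp add: sigX_xact)
  finally show "sigX x \<le> a" .
qed

lemma pS_open_surj: "open_surjection UNIV UNIV (\<lambda>a. xact a top)"
  unfolding open_surjection_def open_map_def
proof
  show "\<exists>fs. open_dimage UNIV UNIV (\<lambda>a. xact a top) fs"
  proof (intro exI)
    show "open_dimage UNIV UNIV (\<lambda>a. xact a top) sigX"
      unfolding open_dimage_def
    proof (intro conjI ballI pS_hom)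
      fix x a show "sigX x \<le> a \<longleftrightarrow> x \<le> xact a top" by (rule sigX_adj)
    next
      fix x a
      have "inf x (xact a top) = xact a x" by (metis xact_eq_inf inf_commute)
      then show "sigX (c_meet UNIV x (xact a top)) = c_meet UNIV (sigX x) a"
        by (simp add: sigX_xact inf_commute)
    qed simp
  qed
  show "inj_on (\<lambda>a. xact a top) UNIV"
  proof (rule inj_onI)
    fix a b assume "xact a top = xact b top"
    then have "sigX (xact a top) = sigX (xact b top)" by simp
    then show "a = b" by (simp add: sigX_xact sigX_top)
  qed
qed

lemma piS_open_surj: "open_surjection UNIV UNIV piS"
  unfolding open_surjection_def open_map_def
proof
  show "\<exists>fs. open_dimage UNIV UNIV piS fs" using od by blast
  show "inj_on piS UNIV"
  proof (rule inj_onI)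
    fix a b assume "piS a = piS b"
    then have "sigt (inf top (piS a)) = sigt (inf top (piS b))" by simp
    then show "a = b" using sigt_frob[of top a] sigt_frob[of top b] sigt_top by simp
  qed
qed

lemma alpha_hom: "frame_hom UNIV QX (alpha_star ract xact qact)"
  unfolding frame_hom_def
proof (intro conjI ballI allI impI)
  show "alpha_star ract xact qact x \<in> QX" for x by (simp add: alpha_eq Ax_mem)
  show "alpha_star ract xact qact (c_top UNIV) = c_top QX"
    by (simp add: alpha_eq moore_top[OF QX_moore] Ax_def)
  fix x y :: 'x
  show "alpha_star ract xact qact (c_meet UNIV x y) =
        c_meet QX (alpha_star ract xact qact x) (alpha_star ract xact qact y)"
    by (simp add: alpha_eq moore_meet[OF QX_moore Ax_mem Ax_mem]) (auto simp: Ax_def)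
next
  fix T :: "'x set" assume "T \<subseteq> UNIV"
  then show "alpha_star ract xact qact (c_lub UNIV T) = c_lub QX (alpha_star ract xact qact ` T)"
    using alpha_sup unfolding sup_hom_def by blast
qed

lemma alpha_pS: "alpha_star ract xact qact (xact b top) = tel QX (lact b top) top"
proof (rule antisym)
  show "tel QX (lact b top) top \<subseteq> alpha_star ract xact qact (xact b top)"
  proof (rule QX_tel_least)
    show "alpha_star ract xact qact (xact b top) \<in> QX" by (simp add: alpha_eq Ax_mem)
    have "qact (lact b top) top \<le> xact b top" by (simp add: qact_lact xact_mono)
    then show "(lact b top, top) \<in> alpha_star ract xact qact (xact b top)" by (simp add: alpha_eq Ax_def)
  qed
  show "alpha_star ract xact qact (xact b top) \<subseteq> tel QX (lact b top) top"
  proof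
    fix p assume "p \<in> alpha_star ract xact qact (xact b top)"
    then obtain q y where p: "p = (q, y)" and qy: "qact q y \<le> xact b top" by (auto simp: alpha_eq Ax_def)
    let ?w = "ip y y"
    have sy: "sigX y = sigQ ?w"
    proof (rule antisym)
      have "y = xact (sigX y) y" by (simp add: sigX_fix)
      also have "\<dots> \<le> xact (sigX y) top" by (rule xact_mono) auto
      also have "\<dots> \<le> qact ?w top" by (rule sigX_le)
      finally have "sigX y \<le> sigX (qact ?w top)" using sigX_mono by (simp add: monoD)
      also have "\<dots> \<le> sigQ ?w" by (rule sigX_qact)
      finally show "sigX y \<le> sigQ ?w" .
      have "sigQ ?w \<le> sigQ (ip y top)" by (rule sigQ_mono[OF ip_mono2]) simp
      then show "sigQ ?w \<le> sigX y" by (simp add: sigX_ip)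
    qed
    have winv: "invo ?w = ?w" by (metis ip_sym)
    have "ract q (sigX y) \<le> mul q (mul ?w (invo ?w))" unfolding sy by (rule ract_sigQ_le)
    also have "\<dots> = mul (mul q ?w) ?w" by (simp add: winv mul_assoc)
    also have "\<dots> = mul (ip (qact q y) y) ?w" by (simp add: ip_qact)
    also have "\<dots> \<le> mul (ip (xact b top) top) ?w" by (rule mul_mono[OF ip_mono[OF qy] order_refl]) simp
    also have "\<dots> = lact b (mul (ip top top) ?w)" by (simp add: ip_lact[symmetric] mul_lact)
    also have "\<dots> \<le> lact b top" by (rule lact_mono) auto
    finally have le: "ract q (sigX y) \<le> lact b top" .
    have "(ract q (sigX y), y) \<in> tel QX (lact b top) top"
      by (rule QX_down[OF QX_tel_mem QX_tel_in le]) simp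
    then have "(q, xact (sigX y) y) \<in> tel QX (lact b top) top" using QX_sat[OF QX_tel_mem] by blast
    then show "p \<in> tel QX (lact b top) top" using p by (simp add: sigX_fix)
  qed
qed

lemma alpha_piS: "alpha_star ract xact qact (piS m) = tel QX top (piS m)"
proof (rule antisym)
  show "tel QX top (piS m) \<subseteq> alpha_star ract xact qact (piS m)"
  proof (rule QX_tel_least)
    show "alpha_star ract xact qact (piS m) \<in> QX" by (simp add: alpha_eq Ax_mem)
    have "sigt (qact top (piS m)) = sigt (piS m)" by (simp add: P2 invo_top sigQ_top xact_top)
    also have "\<dots> \<le> m" using sigt_adj by blast
    finally have "qact top (piS m) \<le> piS m" using sigt_adj by blast
    then show "(top, piS m) \<in> alpha_star ract xact qact (piS m)" by (simp add: alpha_eq Ax_def)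
  qed
  show "alpha_star ract xact qact (piS m) \<subseteq> tel QX top (piS m)"
  proof
    fix p assume "p \<in> alpha_star ract xact qact (piS m)"
    then obtain q y where p: "p = (q, y)" and qy: "qact q y \<le> piS m" by (auto simp: alpha_eq Ax_def)
    let ?s = "sigQ (invo q)"
    have "sigt (xact ?s y) = sigt (qact q y)" by (simp add: P2)
    also have "\<dots> \<le> m" using qy sigt_adj by blast
    finally have le: "xact ?s y \<le> piS m" using sigt_adj by blast
    have "(q, xact ?s y) \<in> tel QX top (piS m)"
      by (rule QX_down[OF QX_tel_mem QX_tel_in _ le]) simp
    then have "(ract q ?s, y) \<in> tel QX top (piS m)" using QX_sat[OF QX_tel_mem] by blast
    then show "p \<in> tel QX top (piS m)" using p by (simp add: ract_sig)
  qed
qed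

lemma unit_law: "copair QX UNIV (\<lambda>q. xact (ups q) top) id (alpha_star ract xact qact x) = x"
proof -
  have "{c_meet UNIV (xact (ups l) top) (id r) | l r. (l, r) \<in> alpha_star ract xact qact x}
        = {xact (ups q) y | q y. qact q y \<le> x}"
    by (auto simp: alpha_eq Ax_def xact_eq_inf[symmetric])
  then show ?thesis unfolding copair_def by (simp add: ups_X)
qed

end

lemma frame_iso_cong:
  assumes iso: "frame_iso S S' h" and m: "moore S U" and eq: "\<And>x. x \<in> S \<Longrightarrow> h x = h' x"
  shows "frame_iso S S' h'"
proof -
  have hom: "frame_hom S S' h" and bij: "bij_betw h S S'" using iso unfolding frame_iso_def by auto
  have bij': "bij_betw h' S S'" using bij eq by (metis bij_betw_cong)
  have top: "c_top S \<in> S" using moore_top[OF m] m unfolding moore_def by simp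
  have meet: "c_meet S x y \<in> S" if "x \<in> S" "y \<in> S" for x y
    using moore_meet[OF m that] moore_meet_mem[OF m that] by simp
  have lub: "c_lub S T \<in> S" if "T \<subseteq> S" for T
    by (rule moore_lub_mem[OF m]) (use that moore_sub[OF m] in blast)
  have "frame_hom S S' h'"
    unfolding frame_hom_def
  proof (intro conjI ballI allI impI)
    fix x assume "x \<in> S" then show "h' x \<in> S'" using hom eq unfolding frame_hom_def by metis
  next
    show "h' (c_top S) = c_top S'" using hom eq top unfolding frame_hom_def by metis
  next
    fix x y assume xy: "x \<in> S" "y \<in> S"
    then show "h' (c_meet S x y) = c_meet S' (h' x) (h' y)"
      using hom eq meet[OF xy] unfolding frame_hom_def by metis
  next
    fix T assume T: "T \<subseteq> S"
    have "h' ` T = h ` T" using eq T by (auto intro!: image_cong)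
    then show "h' (c_lub S T) = c_lub S' (h' ` T)"
      using hom eq lub[OF T] T unfolding frame_hom_def by metis
  qed
  then show ?thesis using bij' unfolding frame_iso_def by simp
qed

context GQ begin

lemma copair_phi:
  "copair T QX (alpha_star ract xact qact) (inj2 QX UNIV UNIV) D = phi_map ract xact qact D"
proof -
  let ?S1 = "{c_meet QX (alpha_star ract xact qact l) (inj2 QX UNIV UNIV r) | l r. (l, r) \<in> D}"
  let ?S2 = "{tel QX q (inf z y) | q z x y. (x, y) \<in> D \<and> qact q z \<le> x}"
  have S1: "?S1 = {Ax l \<inter> tel QX top r | l r. (l, r) \<in> D}"
    by (simp add: alpha_eq inj2_def moore_meet[OF QX_moore Ax_mem QX_tel_mem])
  have "c_lub QX ?S1 = c_lub QX ?S2"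
  proof (rule moore_lub_eq[OF QX_moore])
    fix s assume "s \<in> ?S1"
    then obtain x y where s: "s = Ax x \<inter> tel QX top y" and xy: "(x, y) \<in> D" unfolding S1 by blast
    have E: "c_lub QX ?S2 \<in> QX" by (rule moore_lub_mem[OF QX_moore]) simp
    show "s \<subseteq> c_lub QX ?S2" unfolding s
    proof (rule QX_M[OF E])
      fix p1 p2 assume "(p1, p2) \<in> Ax x"
      then have "tel QX p1 (inf p2 y) \<in> ?S2" using xy by (auto simp: Ax_def)
      then have "tel QX p1 (inf p2 y) \<subseteq> c_lub QX ?S2" by (rule moore_lub_upper[OF QX_moore, rotated]) simp
      then show "(inf p1 top, inf p2 y) \<in> c_lub QX ?S2" using QX_tel_in by auto
    qed
  next
    fix s assume "s \<in> ?S2"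
    then obtain q z x y where s: "s = tel QX q (inf z y)" and xy: "(x, y) \<in> D" and qz: "qact q z \<le> x" by blast
    have mem: "Ax x \<inter> tel QX top y \<in> QX" by (rule moore_meet_mem[OF QX_moore Ax_mem QX_tel_mem])
    have "(q, inf z y) \<in> Ax x" using qz qact_mono[of q q "inf z y" z] by (auto simp: Ax_def)
    moreover have "(q, inf z y) \<in> tel QX top y" by (rule QX_down[OF QX_tel_mem QX_tel_in]) auto
    ultimately have "s \<subseteq> Ax x \<inter> tel QX top y" unfolding s by (intro QX_tel_least[OF mem]) auto
    also have "\<dots> \<subseteq> c_lub QX ?S1" unfolding S1 by (rule moore_lub_upper[OF QX_moore]) (use xy in auto)
    finally show "s \<subseteq> c_lub QX ?S1" .
  qed simp_all
  then show ?thesis unfolding copair_def phi_map_def by simp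
qed

lemma XX_moore: "moore (pushout UNIV UNIV piS piS) UNIV"
  unfolding pushout_def by (rule tensorU_moore)

lemma iso_part: "frame_iso (pushout UNIV UNIV piS piS) QX
   (copair (pushout UNIV UNIV piS piS) QX (alpha_star ract xact qact) (inj2 QX UNIV UNIV))"
  by (rule frame_iso_cong[OF P3[unfolded XX_tensor_def] XX_moore]) (simp add: copair_phi)

end

lemma tensor_cong:
  assumes "\<And>b l. b \<in> B \<Longrightarrow> l \<in> L \<Longrightarrow> fl b l = fl' b l" "\<And>b r. b \<in> B \<Longrightarrow> r \<in> R \<Longrightarrow> fr b r = fr' b r"
  shows "tensor L R fl fr B = tensor L R fl' fr' B"
  unfolding tensor_def using assms by auto

context GQ begin

abbreviation "GX \<equiv> tensor QQ UNIV (\<lambda>b l. tel QQ top (ract top b) \<inter> l) xact UNIV"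

lemma G2X_eq: "G2X_frame (\<lambda>a. lact a top) (\<lambda>a. ract top a) (\<lambda>a. xact a top) = GX"
  unfolding G2X_frame_def G2_eq pushout_def inj2_def
proof (rule tensor_cong)
  fix b :: 'a and l assume "l \<in> QQ"
  then show "c_meet QQ (tel QQ (c_top UNIV) (ract top b)) l = tel QQ top (ract top b) \<inter> l"
    using moore_meet[OF QQ_moore QQ_tel_mem] by simp
next
  fix b :: 'a and r :: 'x
  show "c_meet UNIV (xact b top) r = xact b r" by (simp add: xact_eq_inf[symmetric])
qed

lemma GX_moore: "moore GX (QQ \<times> UNIV)"
proof (rule tensor_moore)
  show "c_lub QQ T \<in> QQ" if "T \<subseteq> QQ" for T by (rule moore_lub_mem[OF QQ_moore]) simp
  show "tel QQ top (ract top b) \<inter> l \<in> QQ" if "l \<in> QQ" for b l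
    by (rule moore_meet_mem[OF QQ_moore QQ_tel_mem that])
qed simp_all

lemma GX_down: "D \<in> GX \<Longrightarrow> (l, r) \<in> D \<Longrightarrow> l' \<in> QQ \<Longrightarrow> l' \<subseteq> l \<Longrightarrow> r' \<le> r \<Longrightarrow> (l', r') \<in> D"
  using tensorD_down[of D QQ UNIV] by blast

lemma GX_lub1: "D \<in> GX \<Longrightarrow> T \<subseteq> QQ \<Longrightarrow> (\<And>t. t \<in> T \<Longrightarrow> (t, r) \<in> D) \<Longrightarrow> (c_lub QQ T, r) \<in> D"
  using tensorD_lub1[of D QQ UNIV _ _ UNIV T r] by blast

lemma GX_tel_in: "l \<in> QQ \<Longrightarrow> (l, r) \<in> tel GX l r"
  by (rule moore_tel_in[OF GX_moore]) simp

lemma GX_tel_mem: "tel GX l r \<in> GX"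
  by (rule moore_tel_mem[OF GX_moore])

lemma QQ_join_tels: "l \<in> QQ \<Longrightarrow> c_lub QQ {tel QQ q1 q2 | q1 q2. (q1, q2) \<in> l} = l"
proof (rule antisym)
  assume l: "l \<in> QQ"
  show "c_lub QQ {tel QQ q1 q2 | q1 q2. (q1, q2) \<in> l} \<subseteq> l"
    by (rule moore_lub_least[OF QQ_moore _ l]) (use QQ_tel_least[OF l] in auto)
  show "l \<subseteq> c_lub QQ {tel QQ q1 q2 | q1 q2. (q1, q2) \<in> l}"
  proof
    fix p assume p: "p \<in> l"
    obtain q1 q2 where pq: "p = (q1, q2)" by fastforce
    have "tel QQ q1 q2 \<subseteq> c_lub QQ {tel QQ q1 q2 | q1 q2. (q1, q2) \<in> l}"
      by (rule moore_lub_upper[OF QQ_moore]) (use p pq in auto)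
    then show "p \<in> c_lub QQ {tel QQ q1 q2 | q1 q2. (q1, q2) \<in> l}" using QQ_tel_in pq by blast
  qed
qed

definition okP :: "('q \<Rightarrow> 'q \<Rightarrow> 'x \<Rightarrow> bool) \<Rightarrow> bool" where
  "okP P \<longleftrightarrow> (\<forall>w. {(q1, q2). P q1 q2 w} \<in> QQ) \<and>
     (\<forall>q1 q2 W. (\<forall>w\<in>W. P q1 q2 w) \<longrightarrow> P q1 q2 (Sup W)) \<and>
     (\<forall>q1 q2 w w'. w' \<le> w \<longrightarrow> P q1 q2 w \<longrightarrow> P q1 q2 w') \<and>
     (\<forall>q1 q2 a w. P q1 (ract q2 a) w \<longleftrightarrow> P q1 q2 (xact a w))"

definition EP :: "('q \<Rightarrow> 'q \<Rightarrow> 'x \<Rightarrow> bool) \<Rightarrow> (('q \<times> 'q) set \<times> 'x) set" where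
  "EP P = {(l, w). l \<in> QQ \<and> (\<forall>(q1, q2)\<in>l. P q1 q2 w)}"

lemma okP_D:
  assumes "okP P"
  shows okP_set: "{(q1, q2). P q1 q2 w} \<in> QQ"
    and okP_sup: "(\<And>w. w \<in> W \<Longrightarrow> P q1 q2 w) \<Longrightarrow> P q1 q2 (Sup W)"
    and okP_anti: "w' \<le> w \<Longrightarrow> P q1 q2 w \<Longrightarrow> P q1 q2 w'"
    and okP_sat: "P q1 (ract q2 a) w \<longleftrightarrow> P q1 q2 (xact a w)"
proof -
  note c = assms[unfolded okP_def]
  show "{(q1, q2). P q1 q2 w} \<in> QQ" using c[THEN conjunct1] by (rule spec)
  show "(\<And>w. w \<in> W \<Longrightarrow> P q1 q2 w) \<Longrightarrow> P q1 q2 (Sup W)"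
    using c[THEN conjunct2, THEN conjunct1] by simp
  show "w' \<le> w \<Longrightarrow> P q1 q2 w \<Longrightarrow> P q1 q2 w'"
    using c[THEN conjunct2, THEN conjunct2, THEN conjunct1] by metis
  show "P q1 (ract q2 a) w \<longleftrightarrow> P q1 q2 (xact a w)"
    using c[THEN conjunct2, THEN conjunct2, THEN conjunct2] by simp
qed

lemma okP_anti12:
  assumes "okP P" "q1' \<le> q1" "q2' \<le> q2" "P q1 q2 w" shows "P q1' q2' w"
proof -
  have "(q1, q2) \<in> {(q1, q2). P q1 q2 w}" using assms(4) by simp
  from QQ_down[OF okP_set[OF assms(1)] this assms(2,3)] show ?thesis by simp
qed

lemma inf_ract': "inf c (ract r a) = ract (inf r c) a"
  by (rule inf_ract)

lemma EP_mem: assumes ok: "okP P" shows "EP P \<in> GX"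
proof (rule tensorI)
  show "EP P \<subseteq> QQ \<times> UNIV" unfolding EP_def by auto
next
  fix l r l' r' assume h: "(l, r) \<in> EP P" "l' \<in> QQ" "r' \<in> UNIV" "l' \<le> l" "r' \<le> r"
  then show "(l', r') \<in> EP P" unfolding EP_def using okP_anti[OF ok] by blast
next
  fix T r assume h: "T \<subseteq> QQ" "r \<in> UNIV" "\<And>t. t \<in> T \<Longrightarrow> (t, r) \<in> EP P"
  have "c_lub QQ T \<subseteq> {(q1, q2). P q1 q2 r}"
  proof (rule moore_lub_least[OF QQ_moore _ okP_set[OF ok]])
    fix s assume "s \<in> T" then show "s \<subseteq> {(q1, q2). P q1 q2 r}" using h(3) unfolding EP_def by blast
  qed simp
  moreover have "c_lub QQ T \<in> QQ" by (rule moore_lub_mem[OF QQ_moore]) simp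
  ultimately show "(c_lub QQ T, r) \<in> EP P" unfolding EP_def by blast
next
  fix l T assume h: "l \<in> QQ" "T \<subseteq> UNIV" "\<And>t. t \<in> T \<Longrightarrow> (l, t) \<in> EP P"
  have "P q1 q2 (Sup T)" if "(q1, q2) \<in> l" for q1 q2
    by (rule okP_sup[OF ok]) (use h(3) that in \<open>auto simp: EP_def\<close>)
  then show "(l, c_lub UNIV T) \<in> EP P" using h(1) unfolding EP_def by auto
next
  fix b :: 'a and l and r :: 'x assume h: "b \<in> UNIV" "l \<in> QQ" "r \<in> UNIV"
  let ?t = "tel QQ top (ract top b)"
  have tl: "?t \<inter> l \<in> QQ" by (rule moore_meet_mem[OF QQ_moore QQ_tel_mem h(2)])
  show "(?t \<inter> l, r) \<in> EP P \<longleftrightarrow> (l, xact b r) \<in> EP P"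
  proof
    assume a: "(?t \<inter> l, r) \<in> EP P"
    have "P q1 q2 (xact b r)" if q: "(q1, q2) \<in> l" for q1 q2
    proof -
      have "(q1, ract q2 b) \<in> l" by (rule QQ_down[OF h(2) q]) (auto simp: ract_le)
      moreover have "(q1, ract q2 b) \<in> ?t"
        by (rule QQ_down[OF QQ_tel_mem QQ_tel_in]) (auto intro: ract_mono)
      ultimately have "P q1 (ract q2 b) r" using a unfolding EP_def by blast
      then show ?thesis using okP_sat[OF ok] by blast
    qed
    then show "(l, xact b r) \<in> EP P" using h(2) unfolding EP_def by blast
  next
    assume a: "(l, xact b r) \<in> EP P"
    have "l \<inter> ?t \<subseteq> {(q1, q2). P q1 q2 r}"
    proof (rule QQ_M[OF okP_set[OF ok]])
      fix p1 p2 assume "(p1, p2) \<in> l"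
      then have "P p1 p2 (xact b r)" using a unfolding EP_def by blast
      then have "P p1 (ract p2 b) r" using okP_sat[OF ok] by blast
      moreover have "inf p2 (ract top b) = ract p2 b" by (simp add: inf_ract)
      ultimately show "(inf p1 top, inf p2 (ract top b)) \<in> {(q1, q2). P q1 q2 r}" by simp
    qed
    then show "(?t \<inter> l, r) \<in> EP P" using tl unfolding EP_def by blast
  qed
qed

definition restr :: "('q \<Rightarrow> 'q \<Rightarrow> 'x \<Rightarrow> bool) \<Rightarrow> ('q \<times> 'q \<times> 'x) set \<Rightarrow> 'q \<Rightarrow> 'q \<Rightarrow> 'x \<Rightarrow> bool" where
  "restr P C r1 r2 w \<longleftrightarrow> (\<forall>(c1, c2, c3)\<in>C. P (inf c1 r1) (inf c2 r2) (inf c3 w))"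

lemma QQ_Inter: "G \<subseteq> QQ \<Longrightarrow> \<Inter>G \<in> QQ"
  using QQ_moore unfolding moore_def by (cases "G = {}") auto

lemma okP_pull1: assumes ok: "okP P" shows "{(r1, r2). P (inf c1 r1) (inf c2 r2) W} \<in> QQ"
proof -
  have "{(r1, r2). \<forall>(q1, q2)\<in>{(c1, c2)}. (inf q1 r1, inf q2 r2) \<in> {(q1, q2). P q1 q2 W}} \<in> QQ"
    by (rule QQ_pull[OF okP_set[OF ok]])
  then show ?thesis by simp
qed

lemma okP_restr: assumes ok: "okP P" shows "okP (restr P C)"
  unfolding okP_def
proof (intro conjI allI impI)
  fix w
  let ?F = "{{(r1, r2). P (inf c1 r1) (inf c2 r2) (inf c3 w)} | c1 c2 c3. (c1, c2, c3) \<in> C}"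
  have "?F \<subseteq> QQ"
  proof
    fix S assume "S \<in> ?F"
    then obtain c1 c2 c3 where S: "S = {(r1, r2). P (inf c1 r1) (inf c2 r2) (inf c3 w)}" by blast
    show "S \<in> QQ" unfolding S by (rule okP_pull1[OF ok])
  qed
  then have "\<Inter>?F \<in> QQ" by (rule QQ_Inter)
  moreover have "\<Inter>?F = {(q1, q2). restr P C q1 q2 w}" unfolding restr_def by auto
  ultimately show "{(q1, q2). restr P C q1 q2 w} \<in> QQ" by simp
next
  fix q1 q2 W assume h: "\<forall>w\<in>W. restr P C q1 q2 w"
  show "restr P C q1 q2 (Sup W)" unfolding restr_def
  proof (clarify)
    fix c1 c2 c3 assume c: "(c1, c2, c3) \<in> C"
    have "P (inf c1 q1) (inf c2 q2) (Sup (inf c3 ` W))"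
      by (rule okP_sup[OF ok]) (use h c in \<open>auto simp: restr_def\<close>)
    then show "P (inf c1 q1) (inf c2 q2) (inf c3 (Sup W))" by (simp add: X_distrib)
  qed
next
  fix q1 q2 w w' assume "w' \<le> w" "restr P C q1 q2 w"
  then show "restr P C q1 q2 w'" unfolding restr_def
    using okP_anti[OF ok] inf_mono[OF order_refl] by fast
next
  fix q1 q2 a w
  have "P (inf c1 q1) (inf c2 (ract q2 a)) (inf c3 w) \<longleftrightarrow> P (inf c1 q1) (inf c2 q2) (inf c3 (xact a w))"
    for c1 c2 c3
  proof -
    have "inf c2 (ract q2 a) = ract (inf c2 q2) a" by (simp add: inf_ract inf_commute)
    moreover have "inf c3 (xact a w) = xact a (inf c3 w)" by (metis xact_inf inf_commute)
    ultimately show ?thesis using okP_sat[OF ok] by simp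
  qed
  then show "restr P C q1 (ract q2 a) w \<longleftrightarrow> restr P C q1 q2 (xact a w)" unfolding restr_def by auto
qed

lemma PM:
  assumes ok: "okP P" and l0: "l0 \<in> QQ"
    and h: "\<And>l' w' q1 q2 r1 r2. (l', w') \<in> K \<Longrightarrow> (q1, q2) \<in> l' \<Longrightarrow> (r1, r2) \<in> l0 \<Longrightarrow>
              P (inf q1 r1) (inf q2 r2) (inf w' z)"
  shows "K \<inter> tel GX l0 z \<subseteq> EP P"
proof
  let ?C = "{(q1, q2, w') | q1 q2 w' l'. (l', w') \<in> K \<and> (q1, q2) \<in> l'}"
  have okR: "okP (restr P ?C)" by (rule okP_restr[OF ok])
  have "(l0, z) \<in> EP (restr P ?C)" unfolding EP_def restr_def using l0 h by fast
  then have tsub: "tel GX l0 z \<subseteq> EP (restr P ?C)" by (rule moore_tel_least[OF GX_moore EP_mem[OF okR]])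
  fix x assume x: "x \<in> K \<inter> tel GX l0 z"
  obtain l w where xs: "x = (l, w)" by fastforce
  have lw: "(l, w) \<in> K" using x xs by blast
  have e: "l \<in> QQ \<and> (\<forall>(q1, q2)\<in>l. restr P ?C q1 q2 w)" using x xs tsub unfolding EP_def by blast
  have "P q1 q2 w" if q: "(q1, q2) \<in> l" for q1 q2
  proof -
    have "restr P ?C q1 q2 w" using e q by blast
    moreover have "(q1, q2, w) \<in> ?C" using lw q by blast
    ultimately have "P (inf q1 q1) (inf q2 q2) (inf w w)" unfolding restr_def by blast
    then show ?thesis by simp
  qed
  then show "x \<in> EP P" using e xs unfolding EP_def by blast
qed

end

context GQ begin

definition Phx :: "'x \<Rightarrow> 'q \<Rightarrow> 'q \<Rightarrow> 'x \<Rightarrow> bool" where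
  "Phx x q1 q2 w \<longleftrightarrow> qact q1 (qact q2 w) \<le> x"

lemma ok_Phx: "okP (Phx x)"
  unfolding okP_def
proof (intro conjI allI impI)
  fix w
  show "{(q1, q2). Phx x q1 q2 w} \<in> QQ"
    unfolding QQ_eq Phx_def
  proof (rule tensorUI)
    fix l r l' r' assume "(l, r) \<in> {(q1, q2). qact q1 (qact q2 w) \<le> x}" "l' \<le> l" "r' \<le> r"
    then show "(l', r') \<in> {(q1, q2). qact q1 (qact q2 w) \<le> x}"
      using qact_mono[OF _ qact_mono[OF _ order_refl]] by (blast intro: order_trans)
  next
    fix T r assume "\<And>t. t \<in> T \<Longrightarrow> (t, r) \<in> {(q1, q2). qact q1 (qact q2 w) \<le> x}"
    then show "(Sup T, r) \<in> {(q1, q2). qact q1 (qact q2 w) \<le> x}" by (simp add: qact_Sup1 SUP_le_iff)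
  next
    fix l T assume "\<And>t. t \<in> T \<Longrightarrow> (l, t) \<in> {(q1, q2). qact q1 (qact q2 w) \<le> x}"
    then show "(l, Sup T) \<in> {(q1, q2). qact q1 (qact q2 w) \<le> x}"
      by (simp add: qact_Sup1 qact_Sup2 image_image SUP_le_iff)
  next
    fix b l r
    show "(ract l b, r) \<in> {(q1, q2). qact q1 (qact q2 w) \<le> x} \<longleftrightarrow> (l, lact b r) \<in> {(q1, q2). qact q1 (qact q2 w) \<le> x}"
      by (simp add: qact_ract qact_lact)
  qed
next
  fix q1 q2 W assume "\<forall>w\<in>W. Phx x q1 q2 w"
  then show "Phx x q1 q2 (Sup W)" unfolding Phx_def by (simp add: qact_Sup2 image_image SUP_le_iff)
next
  fix q1 q2 w w' assume "w' \<le> w" "Phx x q1 q2 w"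
  then show "Phx x q1 q2 w'" unfolding Phx_def
    using qact_mono[OF order_refl qact_mono[OF order_refl]] by (blast intro: order_trans)
next
  fix q1 q2 a w
  show "Phx x q1 (ract q2 a) w \<longleftrightarrow> Phx x q1 q2 (xact a w)" unfolding Phx_def by (simp add: qact_ract)
qed

lemma Phx_anti: "q1' \<le> q1 \<Longrightarrow> q2' \<le> q2 \<Longrightarrow> w' \<le> w \<Longrightarrow> Phx x q1 q2 w \<Longrightarrow> Phx x q1' q2' w'"
  unfolding Phx_def using qact_mono[OF _ qact_mono] by (blast intro: order_trans)

abbreviation EE :: "'x \<Rightarrow> (('q \<times> 'q) set \<times> 'x) set" where "EE x \<equiv> EP (Phx x)"

lemma EE_mem: "EE x \<in> GX" by (rule EP_mem[OF ok_Phx])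

lemma GX_meet: "A \<in> GX \<Longrightarrow> B \<in> GX \<Longrightarrow> c_meet GX A B = A \<inter> B"
  by (rule moore_meet[OF GX_moore])

lemma GX_lub_least: "D \<in> GX \<Longrightarrow> (\<And>s. s \<in> S \<Longrightarrow> s \<subseteq> D) \<Longrightarrow> (\<And>s. s \<in> S \<Longrightarrow> s \<in> GX) \<Longrightarrow> c_lub GX S \<subseteq> D"
  by (rule moore_lub_least[OF GX_moore]) (use moore_sub[OF GX_moore] in blast)+

lemma GX_lub_upper: "(\<And>s. s \<in> S \<Longrightarrow> s \<in> GX) \<Longrightarrow> s \<in> S \<Longrightarrow> s \<subseteq> c_lub GX S"
  by (rule moore_lub_upper[OF GX_moore]) (use moore_sub[OF GX_moore] in blast)+

lemma GX_lub_mem: "(\<And>s. s \<in> S \<Longrightarrow> s \<in> GX) \<Longrightarrow> c_lub GX S \<in> GX"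
  by (rule moore_lub_mem[OF GX_moore]) (use moore_sub[OF GX_moore] in blast)

lemma GX_meet_mem: "A \<in> GX \<Longrightarrow> B \<in> GX \<Longrightarrow> A \<inter> B \<in> GX"
  by (rule moore_meet_mem[OF GX_moore])

lemma EE_sub_gen:
  assumes C: "C \<in> GX"
    and gen: "\<And>q1 q2 w. Phx x q1 q2 w \<Longrightarrow> (tel QQ q1 q2, w) \<in> C"
  shows "EE x \<subseteq> C"
proof
  fix p assume p: "p \<in> EE x"
  obtain l w where pl: "p = (l, w)" by fastforce
  have l: "l \<in> QQ" and lw: "\<And>q1 q2. (q1, q2) \<in> l \<Longrightarrow> Phx x q1 q2 w" using p pl unfolding EP_def by auto
  let ?T = "{tel QQ q1 q2 | q1 q2. (q1, q2) \<in> l}"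
  have "(c_lub QQ ?T, w) \<in> C"
    by (rule GX_lub1[OF C]) (use QQ_tel_mem gen lw in auto)
  then show "p \<in> C" using QQ_join_tels[OF l] pl by simp
qed

definition P23 :: "'x \<Rightarrow> (('q \<times> 'q) set \<times> 'x) set" where
  "P23 y = copair QX GX (\<lambda>q. tel GX (tel QQ top q) top) (\<lambda>r. tel GX UNIV r) (alpha_star ract xact qact y)"

lemma P23_eq: "P23 y = c_lub GX {tel GX (tel QQ top q) top \<inter> tel GX UNIV r | q r. qact q r \<le> y}"
  unfolding P23_def copair_def alpha_eq Ax_def by (simp add: GX_meet[OF GX_tel_mem GX_tel_mem])

lemma P23_mem: "P23 y \<in> GX"
  unfolding P23_eq by (rule GX_lub_mem) (use GX_meet_mem GX_tel_mem in blast)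

lemma m_id_eq:
  "copair QX GX (\<lambda>q. tel GX (Mq q) top) (\<lambda>r. tel GX UNIV r) (alpha_star ract xact qact x) = EE x"
proof -
  let ?S = "{tel GX (Mq q) top \<inter> tel GX UNIV r | q r. qact q r \<le> x}"
  have eq: "copair QX GX (\<lambda>q. tel GX (Mq q) top) (\<lambda>r. tel GX UNIV r) (alpha_star ract xact qact x) = c_lub GX ?S"
    unfolding copair_def alpha_eq Ax_def by (simp add: GX_meet[OF GX_tel_mem GX_tel_mem])
  have mem: "\<And>s. s \<in> ?S \<Longrightarrow> s \<in> GX" using GX_meet_mem GX_tel_mem by blast
  show ?thesis unfolding eq
  proof (rule antisym)
    show "c_lub GX ?S \<subseteq> EE x"
    proof (rule GX_lub_least[OF EE_mem _ mem])
      fix s assume "s \<in> ?S"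
      then obtain q r where s: "s = tel GX (Mq q) top \<inter> tel GX UNIV r" and qr: "qact q r \<le> x" by blast
      let ?P' = "restr (Phx x) {(top, top, r)}"
      have K: "tel GX (Mq q) top \<subseteq> EP ?P'"
      proof (rule moore_tel_least[OF GX_moore EP_mem[OF okP_restr[OF ok_Phx]]])
        have "Phx x q1 q2 (inf r top)" if "(q1, q2) \<in> Mq q" for q1 q2
        proof -
          have "qact q1 (qact q2 r) = qact (mul q1 q2) r" by (simp add: qact_mul)
          also have "\<dots> \<le> qact q r" using that by (intro qact_mono) (auto simp: Mq_def)
          finally show ?thesis using qr unfolding Phx_def by simp
        qed
        then show "(Mq q, top) \<in> EP ?P'" unfolding EP_def restr_def using Mq_mem by auto
      qed
      show "s \<subseteq> EE x" unfolding s
      proof (rule PM[OF ok_Phx])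
        show "UNIV \<in> QQ" using QQ_moore unfolding moore_def by simp
        fix l' w' q1 q2 r1 r2 assume "(l', w') \<in> tel GX (Mq q) top" "(q1, q2) \<in> l'"
        then have "Phx x q1 q2 (inf r w')" using K unfolding EP_def restr_def by auto
        then show "Phx x (inf q1 r1) (inf q2 r2) (inf w' r)"
          by (rule Phx_anti[rotated 3]) (auto simp: inf_commute)
      qed
    qed
    show "EE x \<subseteq> c_lub GX ?S"
    proof (rule EE_sub_gen[OF GX_lub_mem[OF mem]])
      fix q1 q2 w assume h: "Phx x q1 q2 w"
      let ?g = "tel GX (Mq (mul q1 q2)) top \<inter> tel GX UNIV w"
      have "qact (mul q1 q2) w \<le> x" using h unfolding Phx_def by (simp add: qact_mul)
      then have g: "?g \<in> ?S" by blast
      have t: "tel QQ q1 q2 \<in> QQ" by (rule QQ_tel_mem)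
      have "tel QQ q1 q2 \<subseteq> Mq (mul q1 q2)" by (rule QQ_tel_least[OF Mq_mem]) (simp add: Mq_def)
      then have "(tel QQ q1 q2, w) \<in> tel GX (Mq (mul q1 q2)) top"
        by (rule GX_down[OF GX_tel_mem GX_tel_in[OF Mq_mem] t]) simp
      moreover have "(tel QQ q1 q2, w) \<in> tel GX UNIV w"
        by (rule GX_down[OF GX_tel_mem GX_tel_in t]) (use QQ_moore in \<open>auto simp: moore_def\<close>)
      ultimately have "(tel QQ q1 q2, w) \<in> ?g" by blast
      then show "(tel QQ q1 q2, w) \<in> c_lub GX ?S" using GX_lub_upper[OF mem g] by blast
    qed
  qed
qed

end

context GQ begin

lemma UNIV_QQ: "UNIV \<in> QQ" using QQ_moore unfolding moore_def by simp

lemma tel_sub: "(a, b) \<in> tel QQ c d \<Longrightarrow> tel QQ a b \<subseteq> tel QQ c d"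
  by (rule QQ_tel_least[OF QQ_tel_mem])

lemma P23_sub: "P23 y \<subseteq> EP (restr (Phx x) {(q, top, top)})" if qy: "qact q y \<le> x" for q y x
  unfolding P23_eq
proof (rule GX_lub_least[OF EP_mem[OF okP_restr[OF ok_Phx]]])
  fix g assume "g \<in> {tel GX (tel QQ top q') top \<inter> tel GX UNIV y' | q' y'. qact q' y' \<le> y}"
  then obtain q' y' where g: "g = tel GX (tel QQ top q') top \<inter> tel GX UNIV y'" and qy': "qact q' y' \<le> y"
    by blast
  let ?P1 = "restr (Phx x) {(q, top, y')}"
  have s1: "tel QQ top q' \<subseteq> {(q1, q2). ?P1 q1 q2 top}"
  proof (rule QQ_tel_least[OF okP_set[OF okP_restr[OF ok_Phx]]])
    have "qact q (qact q' y') \<le> qact q y" by (rule qact_mono[OF order_refl qy'])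
    then show "(top, q') \<in> {(q1, q2). ?P1 q1 q2 top}" using qy unfolding restr_def Phx_def by simp
  qed
  have K: "tel GX (tel QQ top q') top \<subseteq> EP ?P1"
    by (rule moore_tel_least[OF GX_moore EP_mem[OF okP_restr[OF ok_Phx]]])
       (use s1 QQ_tel_mem in \<open>auto simp: EP_def\<close>)
  show "g \<subseteq> EP (restr (Phx x) {(q, top, top)})" unfolding g
  proof (rule PM[OF okP_restr[OF ok_Phx] UNIV_QQ])
    fix l' w' q1 q2 r1 r2 assume "(l', w') \<in> tel GX (tel QQ top q') top" "(q1, q2) \<in> l'"
    then have "?P1 q1 q2 w'" using K unfolding EP_def by auto
    then have a: "Phx x (inf q q1) q2 (inf y' w')" unfolding restr_def by simp
    have "Phx x (inf q (inf q1 r1)) (inf q2 r2) (inf w' y')"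
      by (rule Phx_anti[OF _ _ _ a]) (auto simp: le_infI2 inf_commute)
    then show "restr (Phx x) {(q, top, top)} (inf q1 r1) (inf q2 r2) (inf w' y')"
      unfolding restr_def by simp
  qed
qed (use GX_meet_mem GX_tel_mem in blast)

lemma id_a_eq:
  "copair QX GX (\<lambda>q. tel GX (tel QQ q top) top) P23 (alpha_star ract xact qact x) = EE x"
proof -
  let ?S = "{tel GX (tel QQ q top) top \<inter> P23 y | q y. qact q y \<le> x}"
  have eq: "copair QX GX (\<lambda>q. tel GX (tel QQ q top) top) P23 (alpha_star ract xact qact x) = c_lub GX ?S"
    unfolding copair_def alpha_eq Ax_def by (simp add: GX_meet[OF GX_tel_mem P23_mem])
  have mem: "\<And>s. s \<in> ?S \<Longrightarrow> s \<in> GX" using GX_meet_mem GX_tel_mem P23_mem by blast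
  show ?thesis unfolding eq
  proof (rule antisym)
    show "c_lub GX ?S \<subseteq> EE x"
    proof (rule GX_lub_least[OF EE_mem _ mem])
      fix s assume "s \<in> ?S"
      then obtain q y where s: "s = tel GX (tel QQ q top) top \<inter> P23 y" and qy: "qact q y \<le> x" by blast
      let ?C = "{(q1, q2, w') | q1 q2 w' l'. (l', w') \<in> P23 y \<and> (q1, q2) \<in> l'}"
      let ?Psi = "restr (Phx x) ?C"
      have A: "P23 y \<subseteq> EP (restr (Phx x) {(q, top, top)})" by (rule P23_sub[OF qy])
      have tS: "tel QQ q top \<subseteq> {(r1, r2). ?Psi r1 r2 top}"
      proof (rule QQ_tel_least[OF okP_set[OF okP_restr[OF ok_Phx]]])
        have "Phx x (inf q1 q) (inf q2 top) (inf w' top)" if "(l', w') \<in> P23 y" "(q1, q2) \<in> l'" for l' w' q1 q2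
        proof -
          have "restr (Phx x) {(q, top, top)} q1 q2 w'" using A that unfolding EP_def by blast
          then show ?thesis unfolding restr_def by (simp add: inf_commute)
        qed
        then show "(q, top) \<in> {(r1, r2). ?Psi r1 r2 top}" unfolding restr_def by blast
      qed
      have "P23 y \<inter> tel GX (tel QQ q top) top \<subseteq> EE x"
      proof (rule PM[OF ok_Phx QQ_tel_mem])
        fix l' w' q1 q2 r1 r2 assume h: "(l', w') \<in> P23 y" "(q1, q2) \<in> l'" "(r1, r2) \<in> tel QQ q top"
        have "?Psi r1 r2 top" using tS h(3) by blast
        moreover have "(q1, q2, w') \<in> ?C" using h(1,2) by blast
        ultimately show "Phx x (inf q1 r1) (inf q2 r2) (inf w' top)" unfolding restr_def by blast
      qed
      then show "s \<subseteq> EE x" unfolding s by blast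
    qed
    show "EE x \<subseteq> c_lub GX ?S"
    proof (rule EE_sub_gen[OF GX_lub_mem[OF mem]])
      fix q1 q2 w assume h: "Phx x q1 q2 w"
      let ?g = "tel GX (tel QQ q1 top) top \<inter> P23 (qact q2 w)"
      have g: "?g \<in> ?S" using h unfolding Phx_def by blast
      have t: "tel QQ q1 q2 \<in> QQ" by (rule QQ_tel_mem)
      have "(q1, q2) \<in> tel QQ q1 top" by (rule QQ_down[OF QQ_tel_mem QQ_tel_in]) auto
      then have "(tel QQ q1 q2, w) \<in> tel GX (tel QQ q1 top) top"
        by (intro GX_down[OF GX_tel_mem GX_tel_in[OF QQ_tel_mem] t] tel_sub) simp_all
      moreover have "(tel QQ q1 q2, w) \<in> P23 (qact q2 w)"
      proof -
        let ?h = "tel GX (tel QQ top q2) top \<inter> tel GX UNIV w"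
        have hS: "?h \<in> {tel GX (tel QQ top q') top \<inter> tel GX UNIV y' | q' y'. qact q' y' \<le> qact q2 w}" by blast
        have "(q1, q2) \<in> tel QQ top q2" by (rule QQ_down[OF QQ_tel_mem QQ_tel_in]) auto
        then have "(tel QQ q1 q2, w) \<in> tel GX (tel QQ top q2) top"
          by (intro GX_down[OF GX_tel_mem GX_tel_in[OF QQ_tel_mem] t] tel_sub) simp_all
        moreover have "(tel QQ q1 q2, w) \<in> tel GX UNIV w"
          by (rule GX_down[OF GX_tel_mem GX_tel_in[OF UNIV_QQ] t]) auto
        ultimately have "(tel QQ q1 q2, w) \<in> ?h" by blast
        moreover have "?h \<subseteq> P23 (qact q2 w)" unfolding P23_eq
          by (rule GX_lub_upper[OF _ hS]) (use GX_meet_mem GX_tel_mem in blast)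
        ultimately show ?thesis by blast
      qed
      ultimately have "(tel QQ q1 q2, w) \<in> ?g" by blast
      then show "(tel QQ q1 q2, w) \<in> c_lub GX ?S" using GX_lub_upper[OF mem g] by blast
    qed
  qed
qed

end

context GQ begin

lemma main: "fully_open_principal_G_bundle
           (\<lambda>a. lact a top) (\<lambda>a. ract top a) ups (mult_radj mul lact ract)
           (\<lambda>a. xact a top) (alpha_star ract xact qact) piS"
proof -
  have eq1: "(\<lambda>q. inj1 GX QQ UNIV (mult_radj mul lact ract q)) = (\<lambda>q. tel GX (Mq q) top)"
    by (simp add: inj1_def radj_eq)
  have eq2: "inj2 GX QQ UNIV = (\<lambda>r. tel GX UNIV r)"
    by (rule ext) (simp add: inj2_def moore_top[OF QQ_moore])
  have eq3: "(\<lambda>q. inj1 GX QQ UNIV (inj1 QQ UNIV UNIV q)) = (\<lambda>q. tel GX (tel QQ q top) top)"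
    by (simp add: inj1_def)
  have eq4: "(\<lambda>q. inj1 GX QQ UNIV (inj2 QQ UNIV UNIV q)) = (\<lambda>q. tel GX (tel QQ top q) top)"
    by (simp add: inj1_def inj2_def)
  have p23: "(\<lambda>x. copair QX GX (\<lambda>q. tel GX (tel QQ top q) top) (\<lambda>r. tel GX UNIV r) (alpha_star ract xact qact x)) = P23"
    by (rule ext) (simp add: P23_def)
  have assoc: "copair QX GX (\<lambda>q. inj1 GX QQ UNIV (mult_radj mul lact ract q)) (inj2 GX QQ UNIV) (alpha_star ract xact qact x) =
      copair QX GX (\<lambda>q. inj1 GX QQ UNIV (inj1 QQ UNIV UNIV q))
        (\<lambda>x. copair QX GX (\<lambda>q. inj1 GX QQ UNIV (inj2 QQ UNIV UNIV q)) (inj2 GX QQ UNIV) (alpha_star ract xact qact x))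
        (alpha_star ract xact qact x)" for x
    unfolding eq1 eq2 eq3 eq4 p23 m_id_eq id_a_eq ..
  have unit: "copair QX UNIV (\<lambda>q. xact (ups q) top) id (alpha_star ract xact qact x) = x" for x
    by (rule unit_law)
  have dpS: "alpha_star ract xact qact (xact b top) = inj1 QX UNIV UNIV (lact b top)" for b
    by (simp add: inj1_def alpha_pS)
  have dpiS: "alpha_star ract xact qact (piS m) = inj2 QX UNIV UNIV (piS m)" for m
    by (simp add: inj2_def alpha_piS)
  show ?thesis
    unfolding fully_open_principal_G_bundle_def G_locale_def Let_def G1X_eq G2_eq G2X_eq
    using X_frame pS_hom alpha_hom dpS assoc unit M_frame piS_hom dpiS iso_part piS_open_surj pS_open_surj
    by (simp add: XX_tensor_def)
qed

end

theorem lemma5p3: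
  fixes mul :: "'q::complete_lattice \<Rightarrow> 'q \<Rightarrow> 'q"
    and invo :: "'q \<Rightarrow> 'q"
    and lact :: "'a::complete_lattice \<Rightarrow> 'q \<Rightarrow> 'q"
    and ract :: "'q \<Rightarrow> 'a \<Rightarrow> 'q"
    and sigQ :: "'q \<Rightarrow> 'a"
    and ups :: "'q \<Rightarrow> 'a"
    and qact :: "'q \<Rightarrow> 'x::complete_lattice \<Rightarrow> 'x"
    and xact :: "'a \<Rightarrow> 'x \<Rightarrow> 'x"
    and ip :: "'x \<Rightarrow> 'x \<Rightarrow> 'q"
    and sigX :: "'x \<Rightarrow> 'a"
    and piS :: "'m::complete_lattice \<Rightarrow> 'x"
    and sigt :: "'x \<Rightarrow> 'm"
  assumes "groupoid_quantale mul invo lact ract sigQ ups"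
    and "principal_Q_locale mul invo lact ract sigQ ups qact xact ip sigX piS sigt"
  shows "fully_open_principal_G_bundle
           (\<lambda>a. lact a top) (\<lambda>a. ract top a) ups (mult_radj mul lact ract)
           (\<lambda>a. xact a top) (alpha_star ract xact qact) piS"
  by (rule GQ.main) (unfold_locales; fact assms)

end
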